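(* Let $n\ge1$, $d\ge0$, let $\lambda$ be a partition and $\beta\in\mathsf{B}_n$ with $\bm{l}(\lambda)\le n$, $\bm{l}(\beta)\le n$ and $|\lambda|+|\beta|=d$, and let $\alpha$ be a composition of $d$ with at most $n$ parts. If $\bm\lambda(\alpha)$ is not dominated by $\bm\lambda(\phi(\lambda,\beta))$, then $C^{\alpha}_{\lambda,\beta}=0$.
   Context: Let $\mathbf{x}=\{x_1,\dots,x_n\}$. A composition is a finite sequence of positive integers $\beta=(\beta_1,\dots,\beta_k)$, length $\bm{l}(\beta)=k$, size $|\beta|=\sum\beta_i$; a partition is a weakly decreasing composition; $\bm\lambda(\alpha)$ is the partition obtained by sorting the parts of $\alpha$ decreasingly. A partition $\lambda$ dominates $\mu$ if $\sum_{i=1}^k\lambda_i\ge\sum_{i=1}^k\mu_i$ for all $k$. $s_\lambda(x_1,\dots,x_n)$ is the Schur polynomial. Composition tableaux: the diagram of $\alpha$ has $\alpha_i$ cells in row $i$ (from the top, cells $(i,j)$ in matrix notation); a composition tableau of shape $\alpha$ is a filling $T$ by positive integers with (CT1) rows weakly decreasing left to right; (CT2) leftmost column strictly increasing top to bottom; (CT3) for cells $(i,k),(j,k)$ with $i<j$: if $\alpha_i\ge\alpha_j$ (and $k\ge2$) then $T(j,k)<T(i,k)$ or $T(i,k-1)<T(j,k)$; if $\alpha_i<\alpha_j$ then $T(j,k)<T(i,k)$ or $T(i,k)<T(j,k+1)$. The quasisymmetric Schur polynomial is $\mathcal{S}_\alpha(x_1,\dots,x_n)=\sum_T\prod_i x_i^{\#\{\text{entries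 }=i\}}$ over composition tableaux of shape $\alpha$ with entries in $\{1,\dots,n\}$; the $\mathcal{S}_\alpha$ with $\bm{l}(\alpha)\le n$ form a basis of the ring $\mathit{QSym}_n$ of quasisymmetric polynomials in $\mathbf{x}$. $C^{\alpha}_{\lambda,\beta}$ denotes the coefficient of $\mathcal{S}_\alpha$ in the expansion of $s_\lambda\,\mathcal{S}_\beta$ in this basis. A composition $\alpha$ is inverting if for each $i$ with $1<i\le\max_j\alpha_j$ there exist $s<t$ with $\alpha_s=i$, $\alpha_t=i-1$. Writing uniquely $\alpha=\gamma\,k^{i_k}\cdots1^{i_1}$ ($i_j\ge1$, $\gamma$ containing none of $1,\dots,k$, $k\ge0$ maximal), $\alpha$ is pure if $k$ is even. $\mathsf{B}_n$ is the set of pure and inverting compositions of length at most $n$. The map $\phi$: given $\lambda,\beta$ as in the claim, if $\bm{l}(\lambda)>\bm{l}(\beta)$ append $\bm{l}(\lambda)-\bm{l}(\beta)$ zeros after the last part of $\beta$; then for $1\le i\le\bm{l}(\lambda)$ add $\lambda_i$ to the $i$-th largest part of the padded $\beta$, where parts are compared by value and if $\beta_j=\beta_k$ with $j<k$ then $\beta_j$ is considered smaller. The result is $\phi(\lambda,\beta)$. *)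

theory Defs
  imports Main "HOL-Library.Poly_Mapping"
begin

(* Polynomials: (nat \<Rightarrow>\<^sub>0 nat) \<Rightarrow>\<^sub>0 int, a monomial being an exponent vector
   indexed by the variable number (variables x_1,...,x_n have indices 1..n). *)
type_synonym ipoly = "(nat \<Rightarrow>\<^sub>0 nat) \<Rightarrow>\<^sub>0 int"

definition is_comp :: "nat list \<Rightarrow> bool" where
  "is_comp \<alpha> \<longleftrightarrow> (\<forall>x\<in>set \<alpha>. 0 < x)"

definition is_partition :: "nat list \<Rightarrow> bool" where
  "is_partition lam \<longleftrightarrow> is_comp lam \<and> sorted_wrt (\<ge>) lam"

definition partition_of :: "nat list \<Rightarrow> nat list" where
  "partition_of \<alpha> = rev (sort \<alpha>)"

definition dominates :: "nat list \<Rightarrow> nat list \<Rightarrow> bool" where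
  "dominates lam mu \<longleftrightarrow> (\<forall>k. sum_list (take k mu) \<le> sum_list (take k lam))"

definition inverting :: "nat list \<Rightarrow> bool" where
  "inverting \<alpha> \<longleftrightarrow> (\<forall>i. 1 < i \<and> (\<exists>j<length \<alpha>. i \<le> \<alpha> ! j) \<longrightarrow>
      (\<exists>s t. s < t \<and> t < length \<alpha> \<and> \<alpha> ! s = i \<and> \<alpha> ! t = i - 1))"

definition stair_suffix :: "nat list \<Rightarrow> nat \<Rightarrow> bool" where
  "stair_suffix \<alpha> k \<longleftrightarrow> (\<exists>\<gamma> (m::nat \<Rightarrow> nat).
      (\<forall>j\<in>{1..k}. 0 < m j) \<and>
      \<alpha> = \<gamma> @ concat (map (\<lambda>j. replicate (m j) j) (rev [1..<Suc k])) \<and>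
      (\<forall>j\<in>{1..k}. j \<notin> set \<gamma>))"

definition stair_index :: "nat list \<Rightarrow> nat" where
  "stair_index \<alpha> = (GREATEST k. stair_suffix \<alpha> k)"

definition pure :: "nat list \<Rightarrow> bool" where
  "pure \<alpha> \<longleftrightarrow> even (stair_index \<alpha>)"

definition Bset :: "nat \<Rightarrow> nat list set" where
  "Bset n = {\<beta>. is_comp \<beta> \<and> pure \<beta> \<and> inverting \<beta> \<and> length \<beta> \<le> n}"

(* the map phi: pad beta with zeros, then add lam_i to the i-th largest part,
   where among equal parts the one with the larger index counts as larger
   (sort_key is stable, so it sorts indices increasingly by (value, index)) *)
definition phi :: "nat list \<Rightarrow> nat list \<Rightarrow> nat list" where
  "phi lam \<beta> = (let b = \<beta> @ replicate (length lam - length \<beta>) 0;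
                   ord = rev (sort_key (\<lambda>j. b ! j) [0..<length b])
               in foldl (\<lambda>c i. c[ord ! i := c ! (ord ! i) + lam ! i]) b [0..<length lam])"

(* cells (row, column), 0-indexed *)
definition cells :: "nat list \<Rightarrow> (nat \<times> nat) set" where
  "cells \<alpha> = {(i, j). i < length \<alpha> \<and> j < \<alpha> ! i}"

definition filling :: "nat \<Rightarrow> nat list \<Rightarrow> (nat \<times> nat \<Rightarrow> nat) \<Rightarrow> bool" where
  "filling n \<alpha> T \<longleftrightarrow> (\<forall>c. c \<notin> cells \<alpha> \<longrightarrow> T c = 0) \<and> (\<forall>c\<in>cells \<alpha>. T c \<in> {1..n})"

definition comp_tableau :: "nat \<Rightarrow> nat list \<Rightarrow> (nat \<times> nat \<Rightarrow> nat) \<Rightarrow> bool" where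
  "comp_tableau n \<alpha> T \<longleftrightarrow> filling n \<alpha> T \<and>
     (\<forall>i j. i < length \<alpha> \<and> Suc j < \<alpha> ! i \<longrightarrow> T (i, Suc j) \<le> T (i, j)) \<and>
     (\<forall>i i'. i < i' \<and> i' < length \<alpha> \<longrightarrow> T (i, 0) < T (i', 0)) \<and>
     (\<forall>i j k. i < j \<and> (i, k) \<in> cells \<alpha> \<and> (j, k) \<in> cells \<alpha> \<longrightarrow>
        (\<alpha> ! j \<le> \<alpha> ! i \<and> 1 \<le> k \<longrightarrow> T (j, k) < T (i, k) \<or> T (i, k - 1) < T (j, k)) \<and>
        (\<alpha> ! i < \<alpha> ! j \<longrightarrow> T (j, k) < T (i, k) \<or> T (i, k) < T (j, Suc k)))"

definition ssyt :: "nat \<Rightarrow> nat list \<Rightarrow> (nat \<times> nat \<Rightarrow> nat) \<Rightarrow> bool" where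
  "ssyt n lam T \<longleftrightarrow> filling n lam T \<and>
     (\<forall>i j. i < length lam \<and> Suc j < lam ! i \<longrightarrow> T (i, j) \<le> T (i, Suc j)) \<and>
     (\<forall>i j. (i, j) \<in> cells lam \<and> (Suc i, j) \<in> cells lam \<longrightarrow> T (i, j) < T (Suc i, j))"

definition tab_monomial :: "nat list \<Rightarrow> (nat \<times> nat \<Rightarrow> nat) \<Rightarrow> ipoly" where
  "tab_monomial \<alpha> T = Poly_Mapping.single (\<Sum>c\<in>cells \<alpha>. Poly_Mapping.single (T c) 1) 1"

definition qschur :: "nat \<Rightarrow> nat list \<Rightarrow> ipoly" where
  "qschur n \<alpha> = (\<Sum>T\<in>{T. comp_tableau n \<alpha> T}. tab_monomial \<alpha> T)"

definition schur :: "nat \<Rightarrow> nat list \<Rightarrow> ipoly" where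
  "schur n lam = (\<Sum>T\<in>{T. ssyt n lam T}. tab_monomial lam T)"

definition lr_coeff :: "nat \<Rightarrow> nat list \<Rightarrow> nat list \<Rightarrow> nat list \<Rightarrow> int" where
  "lr_coeff n lam \<beta> \<alpha> = (THE c :: nat list \<Rightarrow> int.
      finite {\<gamma>. c \<gamma> \<noteq> 0} \<and>
      (\<forall>\<gamma>. c \<gamma> \<noteq> 0 \<longrightarrow> is_comp \<gamma> \<and> length \<gamma> \<le> n) \<and>
      schur n lam * qschur n \<beta> = (\<Sum>\<gamma>\<in>{\<gamma>. c \<gamma> \<noteq> 0}. of_int (c \<gamma>) * qschur n \<gamma>)) \<alpha>"

end

theory Submission
  imports Defs "HOL-Library.Multiset"
begin


abbreviation lkp where "lkp \<equiv> Poly_Mapping.lookup"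
abbreviation kys where "kys \<equiv> Poly_Mapping.keys"

lemma lookup_ofint_mult: "lkp (of_int k * p) e = k * lkp (p::ipoly) e"
proof -
  have "of_int k * p = Poly_Mapping.single 0 k * p" by (metis single_of_int of_int_eq_id id_apply)
  also have "\<dots> = Poly_Mapping.map ((*) k) p" by (simp add: mult_map_scale_conv_mult)
  finally show ?thesis by (auto simp add: map.rep_eq when_def)
qed

lemma mset_partition_of[simp]: "mset (partition_of xs) = mset xs"
  by (simp add: partition_of_def)

lemma length_partition_of[simp]: "length (partition_of xs) = length xs"
  by (simp add: partition_of_def)

lemma sorted_partition_of: "sorted_wrt (\<ge>) (partition_of xs)"
  by (simp add: partition_of_def sorted_wrt_rev)

lemma B2_sorted:
  fixes ys :: "nat list"
  shows "sorted_wrt (\<ge>) ys \<Longrightarrow> M \<subseteq># mset ys \<Longrightarrow> size M \<le> k \<Longrightarrow> sum_mset M \<le> sum_list (take k ys)"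
proof (induction ys arbitrary: M k)
  case Nil
  then show ?case by simp
next
  case (Cons y ys)
  show ?case
  proof (cases k)
    case 0
    then show ?thesis using Cons by simp
  next
    case (Suc k')
    have sy: "sorted_wrt (\<ge>) ys" and yb: "\<forall>z\<in>set ys. z \<le> y" using Cons.prems(1) by auto
    show ?thesis
    proof (cases "y \<in># M")
      case True
      then obtain M' where M: "M = add_mset y M'" by (metis insert_DiffM)
      have "M' \<subseteq># mset ys" using Cons.prems(2) M by simp
      moreover have "size M' \<le> k'" using Cons.prems(3) M Suc by simp
      ultimately have "sum_mset M' \<le> sum_list (take k' ys)" using Cons.IH sy by blast
      then show ?thesis using M Suc by simp
    next
      case False
      have "M \<subseteq># mset ys" using Cons.prems(2) False
        by (simp add: inter_add_left1 subset_mset.inf.absorb_iff2)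
      hence "sum_mset M \<le> sum_list (take k ys)" using Cons.IH sy Cons.prems(3) by blast
      also have "\<dots> \<le> y + sum_list (take k' ys)"
      proof (cases "k' < length ys")
        case True
        have "take k ys = take k' ys @ [ys ! k']" using Suc True by (simp add: take_Suc_conv_app_nth)
        moreover have "ys ! k' \<le> y" using yb True by auto
        ultimately show ?thesis by simp
      next
        case False
        then show ?thesis using Suc by simp
      qed
      finally show ?thesis using Suc by simp
    qed
  qed
qed

lemma mset_nth_image: "mset xs = image_mset (nth xs) (mset_set {..<length xs})"
proof -
  have "mset xs = mset (map (nth xs) [0..<length xs])" by (simp add: map_nth)
  also have "\<dots> = image_mset (nth xs) (mset_set {..<length xs})" by (simp add: atLeast0LessThan)
  finally show ?thesis .
qed

lemma B2:
  fixes xs :: "nat list"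
  assumes "I \<subseteq> {..<length xs}" "card I \<le> k"
  shows "(\<Sum>i\<in>I. xs ! i) \<le> sum_list (take k (partition_of xs))"
proof -
  have "(\<Sum>i\<in>I. xs ! i) = sum_mset (image_mset (nth xs) (mset_set I))" by (simp add: sum_unfold_sum_mset)
  moreover have "image_mset (nth xs) (mset_set I) \<subseteq># mset (partition_of xs)"
    using assms(1) by (simp add: mset_nth_image[of xs] image_mset_subseteq_mono subset_imp_msubset_mset_set)
  moreover have "size (image_mset (nth xs) (mset_set I)) \<le> k" using assms by simp
  ultimately show ?thesis using B2_sorted[OF sorted_partition_of] by metis
qed

lemma submset_indices:
  "M \<subseteq># mset xs \<Longrightarrow> \<exists>I \<subseteq> {..<length xs}. image_mset (nth xs) (mset_set I) = M"
proof (induction xs arbitrary: M)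
  case Nil
  then show ?case by auto
next
  case (Cons x xs)
  show ?case
  proof (cases "x \<in># M")
    case True
    then obtain M' where M: "M = add_mset x M'" by (metis insert_DiffM)
    have "M' \<subseteq># mset xs" using Cons.prems M by simp
    then obtain I where I: "I \<subseteq> {..<length xs}" "image_mset (nth xs) (mset_set I) = M'" using Cons.IH by blast
    have fin: "finite I" using I(1) finite_subset by blast
    have "mset_set (insert 0 (Suc ` I)) = add_mset 0 (image_mset Suc (mset_set I))"
      using fin by (simp add: image_mset_mset_set)
    hence "image_mset (nth (x#xs)) (mset_set (insert 0 (Suc ` I))) = M"
      using I M by (simp add: multiset.map_comp comp_def)
    moreover have "insert 0 (Suc ` I) \<subseteq> {..<length (x#xs)}" using I by auto
    ultimately show ?thesis by blast
  next
    case False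
    have "M \<subseteq># mset xs" using Cons.prems False
      by (simp add: inter_add_left1 subset_mset.inf.absorb_iff2)
    then obtain I where I: "I \<subseteq> {..<length xs}" "image_mset (nth xs) (mset_set I) = M" using Cons.IH by blast
    have fin: "finite I" using I(1) finite_subset by blast
    have "mset_set (Suc ` I) = image_mset Suc (mset_set I)"
      using fin by (simp add: image_mset_mset_set)
    hence "image_mset (nth (x#xs)) (mset_set (Suc ` I)) = M"
      using I by (simp add: multiset.map_comp comp_def)
    moreover have "Suc ` I \<subseteq> {..<length (x#xs)}" using I by auto
    ultimately show ?thesis by blast
  qed
qed

lemma B1:
  fixes xs :: "nat list"
  shows "\<exists>I \<subseteq> {..<length xs}. card I \<le> k \<and> sum_list (take k (partition_of xs)) = (\<Sum>i\<in>I. xs ! i)"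
proof -
  have "mset (take k (partition_of xs)) \<subseteq># mset xs"
    by (metis append_take_drop_id mset_append mset_subset_eq_add_left mset_partition_of)
  then obtain I where I: "I \<subseteq> {..<length xs}" "image_mset (nth xs) (mset_set I) = mset (take k (partition_of xs))"
    using submset_indices by blast
  have "card I = size (mset (take k (partition_of xs)))" using I(2)[symmetric] by simp
  hence "card I \<le> k" by simp
  moreover have "sum_list (take k (partition_of xs)) = (\<Sum>i\<in>I. xs ! i)"
    by (metis I(2) sum_mset_sum_list sum_unfold_sum_mset)
  ultimately show ?thesis using I(1) by blast
qed


lemma conj_identity:
  fixes ys :: "nat list"
  shows "sorted_wrt (\<ge>) ys \<Longrightarrow> (\<forall>y\<in>set ys. y \<le> M) \<Longrightarrow>
    (\<Sum>c<M. min k (length (filter (\<lambda>x. c < x) ys))) = sum_list (take k ys)"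
proof (induction ys arbitrary: k)
  case Nil
  then show ?case by simp
next
  case (Cons y ys)
  have sy: "sorted_wrt (\<ge>) ys" and yb: "\<forall>z\<in>set ys. z \<le> y" and yM: "y \<le> M" and ysM: "\<forall>z\<in>set ys. z \<le> M"
    using Cons.prems by auto
  show ?case
  proof (cases k)
    case 0
    then show ?thesis by simp
  next
    case (Suc k')
    have pt: "min k (length (filter (\<lambda>x. c < x) (y#ys))) = (if c < y then 1 else 0) + min k' (length (filter (\<lambda>x. c < x) ys))" for c
    proof (cases "c < y")
      case True
      then show ?thesis using Suc by simp
    next
      case False
      hence "filter (\<lambda>x. c < x) ys = []" using yb by (auto simp: filter_empty_conv)
      then show ?thesis using False by simp
    qed
    have "(\<Sum>c<M. min k (length (filter (\<lambda>x. c < x) (y#ys)))) =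
        (\<Sum>c<M. (if c < y then 1 else 0)) + (\<Sum>c<M. min k' (length (filter (\<lambda>x. c < x) ys)))"
      by (simp only: pt sum.distrib)
    also have "(\<Sum>c<M. (if c < y then 1 else 0::nat)) = y"
    proof -
      have "{c. c < M \<and> c < y} = {..<y}" using yM by auto
      thus ?thesis by (simp add: sum.If_cases[of "{..<M}"] Int_def)
    qed
    also have "(\<Sum>c<M. min k' (length (filter (\<lambda>x. c < x) ys))) = sum_list (take k' ys)"
      using Cons.IH sy ysM by blast
    finally show ?thesis using Suc by simp
  qed
qed

definition tmono :: "nat list \<Rightarrow> (nat \<times> nat \<Rightarrow> nat) \<Rightarrow> (nat \<Rightarrow>\<^sub>0 nat)" where
  "tmono \<alpha> T = (\<Sum>c\<in>cells \<alpha>. Poly_Mapping.single (T c) 1)"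

lemma cells_Sigma: "cells \<alpha> = Sigma {..<length \<alpha>} (\<lambda>i. {..<\<alpha>!i})"
  by (auto simp: cells_def)

lemma finite_cells[simp]: "finite (cells \<alpha>)"
  by (simp add: cells_Sigma)

lemma lookup_tmono: "lkp (tmono \<alpha> T) v = card {c\<in>cells \<alpha>. T c = v}"
proof -
  have "lkp (tmono \<alpha> T) v = (\<Sum>c\<in>cells \<alpha>. if T c = v then 1 else 0)"
    unfolding tmono_def lookup_sum lookup_single when_def by (rule sum.cong) auto
  also have "\<dots> = card {c\<in>cells \<alpha>. T c = v}"
    by (simp add: sum.inter_filter[symmetric])
  finally show ?thesis .
qed

lemma cell_le_sum: "(i, j) \<in> cells \<alpha> \<Longrightarrow> j < sum_list \<alpha>"
  unfolding cells_def using elem_le_sum_list[of i \<alpha>] by auto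

definition colinj :: "nat list \<Rightarrow> (nat \<times> nat \<Rightarrow> nat) \<Rightarrow> bool" where
  "colinj \<alpha> T \<longleftrightarrow> (\<forall>i j c. (i,c) \<in> cells \<alpha> \<longrightarrow> (j,c) \<in> cells \<alpha> \<longrightarrow> T (i,c) = T (j,c) \<longrightarrow> i = j)"

definition hcol :: "nat list \<Rightarrow> nat \<Rightarrow> nat" where
  "hcol \<alpha> c = card {i. i < length \<alpha> \<and> c < \<alpha>!i}"

lemma hcol_filter: "hcol \<alpha> c = length (filter (\<lambda>x. c < x) (partition_of \<alpha>))"
proof -
  have "hcol \<alpha> c = length (filter (\<lambda>x. c < x) \<alpha>)" by (simp add: hcol_def length_filter_conv_card)
  also have "\<dots> = length (filter (\<lambda>x. c < x) (partition_of \<alpha>))" by (metis mset_filter mset_partition_of size_mset)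
  finally show ?thesis .
qed

lemma sum_hcol: "M \<ge> sum_list \<alpha> \<Longrightarrow> (\<Sum>c<M. min k (hcol \<alpha> c)) = sum_list (take k (partition_of \<alpha>))"
proof -
  assume M: "M \<ge> sum_list \<alpha>"
  have "\<forall>y\<in>set (partition_of \<alpha>). y \<le> M"
  proof
    fix y assume "y \<in> set (partition_of \<alpha>)"
    hence "y \<in> set \<alpha>" by (metis mset_partition_of set_mset_mset)
    thus "y \<le> M" using M member_le_sum_list by fastforce
  qed
  thus ?thesis by (simp add: hcol_filter conj_identity[OF sorted_partition_of])
qed

lemma card_fibers:
  assumes "finite S" "finite B" "g ` S \<subseteq> B"
  shows "card S = (\<Sum>y\<in>B. card {x\<in>S. g x = y})"
  using sum.group[OF assms, of "\<lambda>_. 1::nat"] by simp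

lemma CL:
  assumes ci: "colinj \<alpha> T" and K: "finite K" "card K \<le> k"
  shows "(\<Sum>v\<in>K. lkp (tmono \<alpha> T) v) \<le> sum_list (take k (partition_of \<alpha>))"
proof -
  define S where "S = {c\<in>cells \<alpha>. T c \<in> K}"
  define M where "M = sum_list \<alpha>"
  have finS: "finite S" by (simp add: S_def)
  have "(\<Sum>v\<in>K. lkp (tmono \<alpha> T) v) = (\<Sum>v\<in>K. card {c\<in>S. T c = v})"
    by (rule sum.cong) (auto simp: lookup_tmono S_def intro!: arg_cong[where f=card])
  also have "\<dots> = card S" by (rule card_fibers[symmetric]) (auto simp: S_def K)
  also have "\<dots> = (\<Sum>col<M. card {c\<in>S. snd c = col})"
    by (rule card_fibers) (auto simp: S_def M_def dest: cell_le_sum)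
  also have "\<dots> \<le> (\<Sum>col<M. min k (hcol \<alpha> col))"
  proof (rule sum_mono)
    fix col assume "col \<in> {..<M}"
    define C where "C = {c\<in>S. snd c = col}"
    have finC: "finite C" using finS by (simp add: C_def)
    have "C \<subseteq> (\<lambda>i. (i,col)) ` {i. i < length \<alpha> \<and> col < \<alpha>!i}"
      by (auto simp: C_def S_def cells_def)
    hence "card C \<le> hcol \<alpha> col" unfolding hcol_def
      by (metis (no_types, lifting) card_image_le card_mono finite_imageI finite_nat_set_iff_bounded mem_Collect_eq order_trans)
    moreover have "card C \<le> k"
    proof -
      have "inj_on T C" using ci unfolding inj_on_def C_def S_def colinj_def by auto
      moreover have "T ` C \<subseteq> K" by (auto simp: C_def S_def)
      ultimately have "card C \<le> card K" using card_inj_on_le K(1) by blast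
      thus ?thesis using K(2) by simp
    qed
    ultimately show "card {c\<in>S. snd c = col} \<le> min k (hcol \<alpha> col)" by (simp add: C_def)
  qed
  also have "\<dots> = sum_list (take k (partition_of \<alpha>))" by (simp add: sum_hcol M_def)
  finally show ?thesis .
qed

lemma sum_take_Suc: "sum_list (take (Suc k) xs) = sum_list (take k xs) + (if k < length xs then xs!k else (0::nat))"
  by (simp add: take_Suc_conv_app_nth)

lemma dom_refl: "dominates p p" by (simp add: dominates_def)
lemma dom_trans: "dominates p q \<Longrightarrow> dominates q r \<Longrightarrow> dominates p r"
  unfolding dominates_def using order_trans by blast

lemma dom_antisym:
  assumes "is_comp p" "is_comp q" "dominates p q" "dominates q p"
  shows "p = q"
proof -
  have eq: "sum_list (take k p) = sum_list (take k q)" for k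
    using assms(3,4) unfolding dominates_def by (meson le_antisym)
  have d: "(if k < length p then p!k else 0) = (if k < length q then q!k else 0)" for k
    using eq[of "Suc k"] eq[of k] by (simp add: sum_take_Suc)
  have pos: "k < length p \<Longrightarrow> 0 < p!k" "k < length q \<Longrightarrow> 0 < q!k" for k
    using assms(1,2) by (auto simp: is_comp_def)
  have len: "length p = length q"
  proof (rule ccontr)
    assume "length p \<noteq> length q"
    then consider "length p < length q" | "length q < length p" by linarith
    then show False
    proof cases
      case 1 then show False using d[of "length p"] pos(2)[of "length p"] by simp
    next
      case 2 then show False using d[of "length q"] pos(1)[of "length q"] by simp
    qed
  qed
  show ?thesis
    by (rule nth_equalityI) (use len d in \<open>auto\<close>, metis len)
qed

lemma is_comp_partition_of: "is_comp \<gamma> \<Longrightarrow> is_comp (partition_of \<gamma>)"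
  by (simp add: is_comp_def partition_of_def)

lemma dom_sum: "dominates p q \<Longrightarrow> sum_list q \<le> sum_list p"
  unfolding dominates_def by (metis append_take_drop_id take_all le_add1 order.trans sum_list_append nat_le_linear take_all_iff)

lemma length_le_sum: "is_comp q \<Longrightarrow> length q \<le> sum_list q"
  by (induction q) (auto simp: is_comp_def Suc_leI)

lemma finite_comps: "finite {q. is_comp q \<and> sum_list q \<le> N}"
proof -
  have "{q. is_comp q \<and> sum_list q \<le> N} \<subseteq> {xs. set xs \<subseteq> {0..N} \<and> length xs \<le> N}"
    using length_le_sum member_le_sum_list by fastforce
  moreover have "finite {xs. set xs \<subseteq> {0..N} \<and> length xs \<le> N}" by (rule finite_lists_length_le) simp
  ultimately show ?thesis using finite_subset by blast
qed


definition flat :: "(nat \<Rightarrow>\<^sub>0 nat) \<Rightarrow> nat list" where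
  "flat e = map (lkp e) (sorted_list_of_set (kys e))"

lemma topk_flat:
  "\<exists>K \<subseteq> kys e. card K \<le> k \<and> sum_list (take k (partition_of (flat e))) = (\<Sum>v\<in>K. lkp e v)"
proof -
  define s where "s = sorted_list_of_set (kys e)"
  have ds: "distinct s" by (simp add: s_def)
  obtain I where I: "I \<subseteq> {..<length (flat e)}" "card I \<le> k"
      "sum_list (take k (partition_of (flat e))) = (\<Sum>i\<in>I. flat e ! i)"
    using B1 by blast
  have lenI: "\<forall>i\<in>I. i < length s" using I(1) by (auto simp: flat_def s_def)
  have inj: "inj_on (nth s) I" using ds lenI by (simp add: inj_on_nth)
  have "(\<Sum>i\<in>I. flat e ! i) = (\<Sum>i\<in>I. lkp e (s ! i))"
    using lenI by (auto simp: flat_def s_def intro!: sum.cong)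
  also have "\<dots> = (\<Sum>v\<in>nth s ` I. lkp e v)" using sum.reindex[OF inj, of "lkp e"] by (simp add: comp_def)
  finally have "sum_list (take k (partition_of (flat e))) = (\<Sum>v\<in>nth s ` I. lkp e v)" using I(3) by simp
  moreover have "card (nth s ` I) \<le> k" using I(2) card_image_le[of I] lenI
    by (metis finite_nat_set_iff_bounded le_trans)
  moreover have "nth s ` I \<subseteq> kys e" using lenI
    by (auto simp: s_def) (metis nth_mem set_sorted_list_of_set finite_keys length_sorted_list_of_set)
  ultimately show ?thesis by blast
qed

lemma dom_tmono:
  assumes "colinj \<alpha> T"
  shows "dominates (partition_of \<alpha>) (partition_of (flat (tmono \<alpha> T)))"
  unfolding dominates_def
proof
  fix k
  obtain K where K: "K \<subseteq> kys (tmono \<alpha> T)" "card K \<le> k"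
    "sum_list (take k (partition_of (flat (tmono \<alpha> T)))) = (\<Sum>v\<in>K. lkp (tmono \<alpha> T) v)"
    using topk_flat[of "tmono \<alpha> T" k] by auto
  have fK: "finite K" using K(1) finite_keys by (rule finite_subset)
  show "sum_list (take k (partition_of (flat (tmono \<alpha> T)))) \<le> sum_list (take k (partition_of \<alpha>))"
    unfolding K(3) by (rule CL[OF assms fK K(2)])
qed

lemma dom_prod_bound:
  assumes "colinj lam T1" "colinj \<beta> T2"
  shows "sum_list (take k (partition_of (flat (tmono lam T1 + tmono \<beta> T2)))) \<le>
     sum_list (take k (partition_of lam)) + sum_list (take k (partition_of \<beta>))"
proof -
  obtain K where K: "K \<subseteq> kys (tmono lam T1 + tmono \<beta> T2)" "card K \<le> k"
    "sum_list (take k (partition_of (flat (tmono lam T1 + tmono \<beta> T2)))) = (\<Sum>v\<in>K. lkp (tmono lam T1 + tmono \<beta> T2) v)"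
    using topk_flat[of "tmono lam T1 + tmono \<beta> T2" k] by auto
  have fK: "finite K" using K(1) finite_keys by (rule finite_subset)
  have "(\<Sum>v\<in>K. lkp (tmono lam T1 + tmono \<beta> T2) v) = (\<Sum>v\<in>K. lkp (tmono lam T1) v) + (\<Sum>v\<in>K. lkp (tmono \<beta> T2) v)"
    by (simp add: lookup_add sum.distrib)
  thus ?thesis unfolding K(3) using CL[OF assms(1) fK K(2)] CL[OF assms(2) fK K(2)] by linarith
qed

lemma colinj_ct:
  assumes ct: "comp_tableau n \<alpha> T"
  shows "colinj \<alpha> T"
proof -
  have rows: "\<And>i j. i < length \<alpha> \<Longrightarrow> Suc j < \<alpha> ! i \<Longrightarrow> T (i, Suc j) \<le> T (i, j)"
    and col1: "\<And>i i'. i < i' \<Longrightarrow> i' < length \<alpha> \<Longrightarrow> T (i, 0) < T (i', 0)"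
    and c3: "\<And>i j k. i < j \<Longrightarrow> (i, k) \<in> cells \<alpha> \<Longrightarrow> (j, k) \<in> cells \<alpha> \<Longrightarrow>
        (\<alpha> ! j \<le> \<alpha> ! i \<and> 1 \<le> k \<longrightarrow> T (j, k) < T (i, k) \<or> T (i, k - 1) < T (j, k)) \<and>
        (\<alpha> ! i < \<alpha> ! j \<longrightarrow> T (j, k) < T (i, k) \<or> T (i, k) < T (j, Suc k))"
    using ct unfolding comp_tableau_def by blast+
  have lt: False if "i < j" "(i,c) \<in> cells \<alpha>" "(j,c) \<in> cells \<alpha>" "T (i,c) = T (j,c)" for i j c
  proof (cases c)
    case 0
    then show False using col1[of i j] that by (auto simp: cells_def)
  next
    case (Suc c')
    show False
    proof (cases "\<alpha> ! j \<le> \<alpha> ! i")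
      case True
      have "T (i, c) \<le> T (i, c')" using rows[of i c'] that Suc by (auto simp: cells_def)
      then show False using c3[OF that(1-3)] True Suc that(4) by auto
    next
      case False
      have "T (j, Suc c) \<le> T (j, c)" using rows[of j c] that False by (auto simp: cells_def)
      then show False using c3[OF that(1-3)] False that(4) by auto
    qed
  qed
  show ?thesis unfolding colinj_def by (metis lt nat_neq_iff)
qed

lemma sorted_ge_nth: "sorted_wrt (\<ge>) (xs::nat list) \<Longrightarrow> i \<le> j \<Longrightarrow> j < length xs \<Longrightarrow> xs!j \<le> xs!i"
  by (cases "i = j") (auto simp: sorted_wrt_iff_nth_less)

lemma colinj_ssyt:
  assumes p: "is_partition lam" and s: "ssyt n lam T"
  shows "colinj lam T"
proof -
  have sw: "sorted_wrt (\<ge>) lam" using p by (simp add: is_partition_def)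
  have cs: "\<And>i j. (i, j) \<in> cells lam \<Longrightarrow> (Suc i, j) \<in> cells lam \<Longrightarrow> T (i, j) < T (Suc i, j)"
    using s unfolding ssyt_def by blast
  have lt: "T (i,c) < T (i + Suc m, c)" if "(i + Suc m, c) \<in> cells lam" for i m c
    using that
  proof (induction m)
    case 0
    have l: "Suc i < length lam" "c < lam ! Suc i" using 0 by (auto simp: cells_def)
    have "lam ! (Suc i) \<le> lam ! i" using sorted_ge_nth[OF sw _ l(1), of i] by simp
    hence "(i, c) \<in> cells lam" using l by (auto simp: cells_def)
    then show ?case using cs[of i c] 0 by simp
  next
    case (Suc m)
    have l: "i + Suc (Suc m) < length lam" "c < lam ! (i + Suc (Suc m))" using Suc.prems by (auto simp: cells_def)
    have "lam ! (i + Suc (Suc m)) \<le> lam ! (i + Suc m)" using sorted_ge_nth[OF sw _ l(1), of "i + Suc m"] by simp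
    hence c1: "(i + Suc m, c) \<in> cells lam" using l by (auto simp: cells_def)
    have "T (i + Suc m, c) < T (Suc (i + Suc m), c)" using cs[of "i + Suc m" c] c1 Suc.prems by simp
    then show ?case using Suc.IH[OF c1] by simp
  qed
  have ne: False if h: "i < j" "(j,c) \<in> cells lam" "T (i,c) = T (j,c)" for i j c
  proof -
    obtain m where m0: "j = Suc (i + m)" using less_imp_Suc_add[OF h(1)] by blast
    hence m: "j = i + Suc m" by simp
    have "T (i,c) < T (i + Suc m, c)" using lt[of i m c] h(2) m by simp
    thus False using h(3) m by simp
  qed
  show ?thesis unfolding colinj_def
  proof (intro allI impI)
    fix i j c assume a: "(i, c) \<in> cells lam" "(j, c) \<in> cells lam" "T (i, c) = T (j, c)"
    show "i = j"
    proof (rule ccontr)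
      assume "i \<noteq> j"
      then consider "i < j" | "j < i" by linarith
      thus False
      proof cases
        case 1 show False by (rule ne[OF 1 a(2) a(3)])
      next
        case 2 show False by (rule ne[OF 2 a(1) a(3)[symmetric]])
      qed
    qed
  qed
qed


lemma sum_list_take_nth: "sum_list (take k xs) = (\<Sum>i<min k (length xs). (xs::nat list) ! i)"
  by (simp add: sum_list_sum_nth atLeast0LessThan min.commute)

lemma partition_of_partition: "is_partition lam \<Longrightarrow> partition_of lam = lam"
proof -
  assume "is_partition lam"
  hence "sorted_wrt (\<ge>) lam" by (simp add: is_partition_def)
  hence "sorted (rev lam)" by (simp add: sorted_wrt_rev)
  hence "sort lam = rev lam" by (intro properties_for_sort) simp_all
  thus ?thesis by (simp add: partition_of_def)
qed

lemma map_sort_key: "map f (sort_key f xs) = sort (map f (xs::nat list))" for f :: "nat \<Rightarrow> nat"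
  by (rule properties_for_sort[symmetric]) (simp_all add: sorted_sort_key)

lemma fold_upd:
  fixes b lam ord :: "nat list"
  defines "F \<equiv> (\<lambda>c i. c[ord ! i := c ! (ord ! i) + lam ! i])"
  assumes "length lam \<le> length ord" "set ord \<subseteq> {..<length b}"
  shows "m \<le> length lam \<Longrightarrow> length (foldl F b [0..<m]) = length b \<and>
     (\<forall>j<length b. foldl F b [0..<m] ! j = b ! j + (\<Sum>i<m. if ord ! i = j then lam ! i else 0))"
proof (induction m)
  case 0
  then show ?case by simp
next
  case (Suc m)
  have om: "ord ! m < length b" using assms(2,3) Suc.prems by (meson lessThan_iff less_eq_Suc_le nth_mem order_trans subsetD)
  show ?case using Suc om by (auto simp: F_def nth_list_update)
qed

lemma phi_bound:
  fixes lam \<beta> :: "nat list"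
  shows "sum_list (take k lam) + sum_list (take k (partition_of \<beta>)) \<le> sum_list (take k (partition_of (phi lam \<beta>)))"
proof -
  define b where "b = \<beta> @ replicate (length lam - length \<beta>) 0"
  define ord where "ord = rev (sort_key (\<lambda>j. b ! j) [0..<length b])"
  define F where "F = (\<lambda>c i. c[ord ! i := c ! (ord ! i) + lam ! i])"
  define r where "r = foldl F b [0..<length lam]"
  define L where "L = length b"
  have r_phi: "phi lam \<beta> = r" by (simp add: phi_def b_def ord_def F_def r_def Let_def)
  have lenb: "length lam \<le> L" "length \<beta> \<le> L" by (auto simp: L_def b_def)
  have mo: "mset ord = mset [0..<L]" by (simp add: ord_def L_def)
  have setord: "set ord = {..<L}" by (metis mo set_mset_mset set_upt atLeast0LessThan)
  have dord: "distinct ord" by (simp add: ord_def)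
  have lord: "length ord = L" by (metis mo size_mset length_upt minus_nat.diff_0)
  have mapord: "map (nth b) ord = partition_of b"
  proof -
    have "map (nth b) ord = rev (map (nth b) (sort_key (nth b) [0..<length b]))" by (simp add: ord_def rev_map)
    also have "\<dots> = rev (sort (map (nth b) [0..<length b]))" by (simp add: map_sort_key)
    also have "\<dots> = partition_of b" by (simp add: partition_of_def map_nth)
    finally show ?thesis .
  qed
  have fu: "length r = L \<and> (\<forall>j<L. r ! j = b ! j + (\<Sum>i<length lam. if ord ! i = j then lam ! i else 0))"
    using fold_upd[of lam ord b "length lam"] lenb lord setord by (simp add: r_def F_def L_def)
  define k' where "k' = min k L"
  define I where "I = nth ord ` {..<k'}"
  have inj: "inj_on (nth ord) {..<k'}" using dord lord by (auto simp: inj_on_def k'_def nth_eq_iff_index_eq)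
  have IL: "I \<subseteq> {..<length r}" using fu lord setord by (auto simp: I_def k'_def)
  have cI: "card I \<le> k" using inj by (simp add: I_def card_image k'_def)
  have inner: "(\<Sum>i'<length lam. if ord ! i' = ord ! i then lam ! i' else 0) = (if i < length lam then lam ! i else 0)"
    if "i < L" for i
  proof -
    have "\<And>i'. i' < length lam \<Longrightarrow> (ord ! i' = ord ! i) = (i' = i)"
      using dord lord that lenb by (simp add: nth_eq_iff_index_eq)
    hence "(\<Sum>i'<length lam. if ord ! i' = ord ! i then lam ! i' else 0) = (\<Sum>i'<length lam. if i' = i then lam ! i' else 0)"
      by (intro sum.cong) auto
    thus ?thesis by simp
  qed
  have "(\<Sum>j\<in>I. r ! j) = (\<Sum>i<k'. r ! (ord ! i))" by (simp add: I_def sum.reindex[OF inj])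
  also have "\<dots> = (\<Sum>i<k'. b ! (ord ! i) + (if i < length lam then lam ! i else 0))"
  proof (rule sum.cong)
    fix i assume "i \<in> {..<k'}"
    hence i: "i < L" by (simp add: k'_def)
    hence "ord ! i < L" using setord lord nth_mem by blast
    thus "r ! (ord ! i) = b ! (ord ! i) + (if i < length lam then lam ! i else 0)" using fu inner[OF i] by simp
  qed simp
  also have "\<dots> = (\<Sum>i<k'. partition_of b ! i) + (\<Sum>i<k'. if i < length lam then lam ! i else 0)"
    by (simp add: sum.distrib mapord[symmetric] k'_def lord)
  also have "(\<Sum>i<k'. partition_of b ! i) = sum_list (take k (partition_of b))"
    by (simp add: sum_list_take_nth k'_def L_def)
  also have "(\<Sum>i<k'. if i < length lam then lam ! i else 0) = sum_list (take k lam)"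
  proof -
    have "(\<Sum>i<k'. if i < length lam then lam ! i else 0) = (\<Sum>i\<in>{..<k'} \<inter> {i. i < length lam}. lam ! i)"
      by (simp add: sum.If_cases)
    also have "{..<k'} \<inter> {i. i < length lam} = {..<min k (length lam)}" using lenb by (auto simp: k'_def)
    finally show ?thesis by (simp add: sum_list_take_nth)
  qed
  finally have eq: "(\<Sum>j\<in>I. r ! j) = sum_list (take k (partition_of b)) + sum_list (take k lam)" .
  have "sum_list (take k (partition_of \<beta>)) \<le> sum_list (take k (partition_of b))"
  proof -
    obtain J where J: "J \<subseteq> {..<length \<beta>}" "card J \<le> k" "sum_list (take k (partition_of \<beta>)) = (\<Sum>i\<in>J. \<beta> ! i)"
      using B1[of \<beta> k] by blast
    have "(\<Sum>i\<in>J. \<beta> ! i) = (\<Sum>i\<in>J. b ! i)" using J(1) by (auto simp: b_def nth_append intro!: sum.cong)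
    also have "\<dots> \<le> sum_list (take k (partition_of b))" using J lenb by (intro B2) (auto simp: L_def)
    finally show ?thesis using J(3) by simp
  qed
  moreover have "(\<Sum>j\<in>I. r ! j) \<le> sum_list (take k (partition_of r))" using B2[OF IL cI] .
  ultimately show ?thesis using eq r_phi by simp
qed


lemma card_filter_sum: "finite A \<Longrightarrow> card {x\<in>A. P x} = (\<Sum>x\<in>A. if P x then 1 else (0::nat))"
  by (simp add: sum.inter_filter[symmetric])

lemma double_count:
  assumes "finite V" "finite C"
  shows "(\<Sum>v\<in>V. card {c\<in>C. P v c}) = (\<Sum>c\<in>C. card {v\<in>V. P v c})"
  using assms by (simp add: card_filter_sum sum.swap[of _ V C])

lemma mset_flat: "mset (flat e) = image_mset (lkp e) (mset_set (kys e))"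
  by (simp add: flat_def) (metis finite_keys sorted_list_of_set.distinct_sorted_key_list_of_set mset_set_set sorted_list_of_set.set_sorted_key_list_of_set)

lemma count_flat: "length (filter P (flat e)) = card {v\<in>kys e. P (lkp e v)}"
proof -
  have "length (filter P (flat e)) = size (filter_mset P (mset (flat e)))" by (metis mset_filter size_mset)
  also have "\<dots> = size (filter_mset (\<lambda>v. P (lkp e v)) (mset_set (kys e)))"
    by (simp add: mset_flat filter_mset_image_mset)
  also have "\<dots> = card {v\<in>kys e. P (lkp e v)}" by (simp add: filter_mset_mset_set)
  finally show ?thesis .
qed

context
  fixes n :: nat and \<alpha> :: "nat list" and T :: "nat \<times> nat \<Rightarrow> nat"
  assumes ct: "comp_tableau n \<alpha> T" and ic: "is_comp \<alpha>"
    and eqp: "mset (flat (tmono \<alpha> T)) = mset \<alpha>"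
begin

abbreviation "eT \<equiv> tmono \<alpha> T"
abbreviation "fT \<equiv> lkp (tmono \<alpha> T)"
abbreviation "VT \<equiv> kys (tmono \<alpha> T)"
definition Col :: "nat \<Rightarrow> nat set" where "Col c = T ` {x\<in>cells \<alpha>. snd x = c}"

lemma ci: "colinj \<alpha> T" by (rule colinj_ct[OF ct])

lemma f_eq: "fT v = card {x\<in>cells \<alpha>. T x = v}" by (simp add: lookup_tmono)

lemma inV: "x \<in> cells \<alpha> \<Longrightarrow> T x \<in> VT"
proof -
  assume x: "x \<in> cells \<alpha>"
  have "{y\<in>cells \<alpha>. T y = T x} \<noteq> {}" using x by blast
  hence "fT (T x) \<noteq> 0" by (simp add: f_eq)
  thus ?thesis by (simp add: in_keys_iff)
qed

lemma Col_V: "Col c \<subseteq> VT" using inV by (auto simp: Col_def)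

lemma card_Col: "card (Col c) = hcol \<alpha> c"
proof -
  have "{x\<in>cells \<alpha>. snd x = c} = (\<lambda>i. (i,c)) ` {i. i < length \<alpha> \<and> c < \<alpha>!i}"
    by (auto simp: cells_def)
  moreover have "inj_on T {x\<in>cells \<alpha>. snd x = c}" using ci by (auto simp: inj_on_def colinj_def)
  ultimately show ?thesis unfolding Col_def hcol_def
    by (simp add: card_image inj_on_def)
qed

lemma hcolV: "card {v\<in>VT. c < fT v} = hcol \<alpha> c"
proof -
  have "card {v\<in>VT. c < fT v} = length (filter (\<lambda>x. c < x) (flat eT))" by (simp add: count_flat)
  also have "\<dots> = length (filter (\<lambda>x. c < x) \<alpha>)" by (metis eqp mset_filter size_mset)
  also have "\<dots> = hcol \<alpha> c" by (simp add: hcol_def length_filter_conv_card)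
  finally show ?thesis .
qed

lemma le_f: "card {c\<in>{..<m}. v \<in> Col c} \<le> min (fT v) m"
proof -
  have "{c\<in>{..<m}. v \<in> Col c} \<subseteq> snd ` {x\<in>cells \<alpha>. T x = v}" by (auto simp: Col_def)
  hence "card {c\<in>{..<m}. v \<in> Col c} \<le> card (snd ` {x\<in>cells \<alpha>. T x = v})"
    by (intro card_mono) simp_all
  also have "\<dots> \<le> card {x\<in>cells \<alpha>. T x = v}" by (rule card_image_le) simp
  finally have "card {c\<in>{..<m}. v \<in> Col c} \<le> fT v" by (simp add: f_eq)
  moreover have "card {c\<in>{..<m}. v \<in> Col c} \<le> card {..<m}" by (intro card_mono) auto
  ultimately show ?thesis by simp
qed

lemma min_card: "min (a::nat) m = card {c\<in>{..<m}. c < a}"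
proof -
  have "{c\<in>{..<m}. c < a} = {..<min a m}" by auto
  thus ?thesis by simp
qed

lemma eq_f: "v \<in> VT \<Longrightarrow> card {c\<in>{..<m}. v \<in> Col c} = min (fT v) m"
proof -
  assume v: "v \<in> VT"
  have s1: "(\<Sum>v\<in>VT. card {c\<in>{..<m}. v \<in> Col c}) = (\<Sum>c\<in>{..<m}. card {v\<in>VT. v \<in> Col c})"
    by (rule double_count) auto
  also have "\<dots> = (\<Sum>c\<in>{..<m}. hcol \<alpha> c)"
  proof (rule sum.cong)
    fix c have "{v\<in>VT. v \<in> Col c} = Col c" using Col_V[of c] by blast
    thus "card {v\<in>VT. v \<in> Col c} = hcol \<alpha> c" using card_Col[of c] by simp
  qed simp
  also have "\<dots> = (\<Sum>c\<in>{..<m}. card {v\<in>VT. c < fT v})" by (simp add: hcolV)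
  also have "\<dots> = (\<Sum>v\<in>VT. card {c\<in>{..<m}. c < fT v})" by (rule double_count[symmetric]) auto
  also have "\<dots> = (\<Sum>v\<in>VT. min (fT v) m)" by (simp add: min_card)
  finally have "(\<Sum>v\<in>VT. card {c\<in>{..<m}. v \<in> Col c}) = (\<Sum>v\<in>VT. min (fT v) m)" .
  thus ?thesis by (rule sum_mono_inv) (use le_f v in auto)
qed

lemma Col_iff: "v \<in> VT \<Longrightarrow> v \<in> Col c \<longleftrightarrow> c < fT v"
proof -
  assume v: "v \<in> VT"
  have a: "card {c'\<in>{..<Suc c}. v \<in> Col c'} = min (fT v) (Suc c)" using eq_f[OF v] .
  have b: "card {c'\<in>{..<c}. v \<in> Col c'} = min (fT v) c" using eq_f[OF v] .
  show ?thesis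
  proof (cases "v \<in> Col c")
    case True
    hence "{c'\<in>{..<Suc c}. v \<in> Col c'} = insert c {c'\<in>{..<c}. v \<in> Col c'}" by auto
    hence "card {c'\<in>{..<Suc c}. v \<in> Col c'} = Suc (card {c'\<in>{..<c}. v \<in> Col c'})" by simp
    then show ?thesis using a b True by (simp add: min_def split: if_splits)
  next
    case False
    hence "{c'\<in>{..<Suc c}. v \<in> Col c'} = {c'\<in>{..<c}. v \<in> Col c'}" using less_Suc_eq by auto
    then show ?thesis using a b False by (simp add: min_def split: if_splits)
  qed
qed

definition rv :: "nat \<Rightarrow> nat" where "rv i = T (i, 0)"

lemma x_mono: "i < j \<Longrightarrow> j < length \<alpha> \<Longrightarrow> rv i < rv j"
  using ct unfolding comp_tableau_def rv_def by blast

lemma x_inj: "i < length \<alpha> \<Longrightarrow> j < length \<alpha> \<Longrightarrow> rv i = rv j \<Longrightarrow> i = j"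
  by (cases i j rule: linorder_cases) (auto dest: x_mono)

lemma rowdec: "i < length \<alpha> \<Longrightarrow> Suc j < \<alpha> ! i \<Longrightarrow> T (i, Suc j) \<le> T (i, j)"
  using ct unfolding comp_tableau_def by blast

lemma c3b: "i < j \<Longrightarrow> (i, k) \<in> cells \<alpha> \<Longrightarrow> (j, k) \<in> cells \<alpha> \<Longrightarrow> \<alpha> ! i < \<alpha> ! j \<Longrightarrow>
     T (j, k) < T (i, k) \<or> T (i, k) < T (j, Suc k)"
  using ct unfolding comp_tableau_def by blast

lemma rowconst: "(i, c) \<in> cells \<alpha> \<Longrightarrow> T (i, c) = rv i"
proof (induction c arbitrary: i)
  case 0
  then show ?case by (simp add: rv_def)
next
  case (Suc c)
  define R where "R = {i. i < length \<alpha> \<and> Suc c < \<alpha> ! i}"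
  have finR: "finite R" by (simp add: R_def)
  have Rc: "i \<in> R \<Longrightarrow> (i, c) \<in> cells \<alpha>" for i by (auto simp: R_def cells_def)
  have le: "i \<in> R \<Longrightarrow> T (i, Suc c) \<le> rv i" for i
    using rowdec[of i c] Suc.IH[OF Rc] by (auto simp: R_def)
  have ColR: "Col (Suc c) = (\<lambda>i. T (i, Suc c)) ` R"
    by (auto simp: Col_def R_def cells_def image_iff)
  have sub: "Col (Suc c) \<subseteq> rv ` R"
  proof
    fix v assume "v \<in> Col (Suc c)"
    then obtain k where k: "k \<in> R" "v = T (k, Suc c)" using ColR by auto
    have kc: "(k, Suc c) \<in> cells \<alpha>" using k by (auto simp: R_def cells_def)
    have vV: "v \<in> VT" using inV[OF kc] k by simp
    have "Suc c < fT v" using Col_iff[OF vV, of "Suc c"] \<open>v \<in> Col (Suc c)\<close> by simp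
    hence "v \<in> Col c" using Col_iff[OF vV, of c] by simp
    then obtain j where j: "(j, c) \<in> cells \<alpha>" "v = T (j, c)" by (auto simp: Col_def)
    have vx: "v = rv j" using Suc.IH[OF j(1)] j(2) by simp
    show "v \<in> rv ` R"
    proof (cases "j \<in> R")
      case True then show ?thesis using vx by blast
    next
      case False
      have jlen: "j < length \<alpha>" "\<alpha> ! j = Suc c" using j(1) False by (auto simp: R_def cells_def)
      have klen: "k < length \<alpha>" "Suc c < \<alpha> ! k" using k by (auto simp: R_def)
      have "rv j \<le> rv k" using le[OF k(1)] k(2) vx by simp
      moreover have "j \<noteq> k" using False k(1) by blast
      ultimately have jk: "j < k"
      proof -
        assume a: "rv j \<le> rv k" "j \<noteq> k"
        show "j < k"
        proof (rule ccontr)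
          assume "\<not> j < k"
          hence "k < j" using a(2) by simp
          hence "rv k < rv j" using x_mono jlen by blast
          thus False using a(1) by simp
        qed
      qed
      have "T (k, c) < T (j, c) \<or> T (j, c) < T (k, Suc c)"
        using c3b[OF jk j(1) Rc[OF k(1)]] jlen klen by simp
      moreover have "T (k, c) = rv k" using Suc.IH[OF Rc[OF k(1)]] .
      moreover have "rv j < rv k" using x_mono[OF jk klen(1)] .
      ultimately show ?thesis using j(2) k(2) vx by simp
    qed
  qed
  have injx: "inj_on rv R" using x_inj by (auto simp: inj_on_def R_def)
  have injT: "inj_on (\<lambda>i. T (i, Suc c)) R" using ci by (auto simp: inj_on_def colinj_def R_def cells_def)
  have "card (Col (Suc c)) = card R" using ColR injT by (simp add: card_image)
  also have "\<dots> = card (rv ` R)" using injx by (simp add: card_image)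
  finally have ColEq: "Col (Suc c) = rv ` R" using sub finR by (simp add: card_subset_eq)
  have "(\<Sum>i\<in>R. T (i, Suc c)) = sum id (Col (Suc c))" using ColR injT by (simp add: sum.reindex)
  also have "\<dots> = (\<Sum>i\<in>R. rv i)" using ColEq injx by (simp add: sum.reindex)
  finally have sumeq: "(\<Sum>i\<in>R. T (i, Suc c)) = (\<Sum>i\<in>R. rv i)" .
  have iR: "i \<in> R" using Suc.prems by (auto simp: R_def cells_def)
  show ?case using sum_mono_inv[OF sumeq _ iR finR] le by blast
qed

lemma cells_val: "{y\<in>cells \<alpha>. T y = rv i} = {i} \<times> {..<\<alpha>!i}" if "i < length \<alpha>"
proof -
  have "y \<in> cells \<alpha> \<Longrightarrow> T y = rv i \<longleftrightarrow> fst y = i" for y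
    using rowconst[of "fst y" "snd y"] x_inj[of "fst y" i] that by (cases y) (auto simp: cells_def)
  thus ?thesis using that by (auto simp: cells_def)
qed

lemma f_x: "i < length \<alpha> \<Longrightarrow> fT (rv i) = \<alpha> ! i"
  by (simp add: f_eq cells_val card_cartesian_product)

lemma V_eq: "VT = rv ` {..<length \<alpha>}"
proof
  show "VT \<subseteq> rv ` {..<length \<alpha>}"
  proof
    fix v assume "v \<in> VT"
    hence "fT v \<noteq> 0" by (simp add: in_keys_iff)
    hence "{y\<in>cells \<alpha>. T y = v} \<noteq> {}" using f_eq[of v] by (metis card.empty)
    then obtain y where "y \<in> cells \<alpha>" "T y = v" by blast
    thus "v \<in> rv ` {..<length \<alpha>}" using rowconst[of "fst y" "snd y"] by (cases y) (auto simp: cells_def)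
  qed
next
  show "rv ` {..<length \<alpha>} \<subseteq> VT"
  proof
    fix v assume "v \<in> rv ` {..<length \<alpha>}"
    then obtain i where i: "i < length \<alpha>" "v = rv i" by auto
    have "0 < \<alpha> ! i" using ic i by (simp add: is_comp_def)
    thus "v \<in> VT" using f_x[OF i(1)] i(2) by (simp add: in_keys_iff)
  qed
qed

lemma sls: "sorted_list_of_set VT = map rv [0..<length \<alpha>]"
proof -
  have "sorted_wrt (<) (map rv [0..<length \<alpha>])"
    by (auto simp: sorted_wrt_iff_nth_less intro: x_mono)
  hence "sorted (map rv [0..<length \<alpha>])" "distinct (map rv [0..<length \<alpha>])"
    by (auto simp: strict_sorted_iff)
  moreover have "set (map rv [0..<length \<alpha>]) = VT" by (simp add: V_eq atLeast0LessThan)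
  ultimately show ?thesis using sorted_list_of_set.idem_if_sorted_distinct[of "map rv [0..<length \<alpha>]"] by simp
qed

lemma flat_eq: "flat eT = \<alpha>"
  unfolding flat_def sls by (rule nth_equalityI) (simp_all add: f_x)

lemma T_canon: "y \<in> cells \<alpha> \<Longrightarrow> T y = sorted_list_of_set VT ! fst y"
  using rowconst[of "fst y" "snd y"] by (cases y) (auto simp: sls cells_def)

end


lemma finite_filling: "finite {T. filling n \<alpha> T}"
proof -
  have "{T. filling n \<alpha> T} \<subseteq> {T. \<forall>c. (c \<in> cells \<alpha> \<longrightarrow> T c \<in> {0..n}) \<and> (c \<notin> cells \<alpha> \<longrightarrow> T c = 0)}"
    by (auto simp: filling_def)
  moreover have "finite {T. \<forall>c. (c \<in> cells \<alpha> \<longrightarrow> T c \<in> {0..n}) \<and> (c \<notin> cells \<alpha> \<longrightarrow> T c = 0)}"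
    by (rule finite_set_of_finite_funs) simp_all
  ultimately show ?thesis using finite_subset by blast
qed

lemma finite_ct: "finite {T. comp_tableau n \<alpha> T}"
  by (rule finite_subset[OF _ finite_filling[of n \<alpha>]]) (auto simp: comp_tableau_def)

lemma finite_ssyt: "finite {T. ssyt n \<alpha> T}"
  by (rule finite_subset[OF _ finite_filling[of n \<alpha>]]) (auto simp: ssyt_def)

lemma tab_monomial_eq: "tab_monomial \<alpha> T = Poly_Mapping.single (tmono \<alpha> T) 1"
  by (simp add: tab_monomial_def tmono_def)

lemma lookup_single_sum:
  assumes "finite A"
  shows "lkp (\<Sum>T\<in>A. Poly_Mapping.single (g T) (1::int)) e = int (card {T\<in>A. g T = e})"
proof -
  have "lkp (\<Sum>T\<in>A. Poly_Mapping.single (g T) (1::int)) e = (\<Sum>T\<in>A. if g T = e then 1 else 0)"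
    unfolding lookup_sum lookup_single when_def by (rule sum.cong) auto
  also have "\<dots> = int (card {T\<in>A. g T = e})"
    using assms by (simp add: sum.inter_filter[symmetric])
  finally show ?thesis .
qed

lemma lookup_qschur: "lkp (qschur n \<alpha>) e = int (card {T. comp_tableau n \<alpha> T \<and> tmono \<alpha> T = e})"
  unfolding qschur_def tab_monomial_eq
  by (subst lookup_single_sum[OF finite_ct]) simp

lemma lookup_prod: "lkp (schur n lam * qschur n \<beta>) e =
   int (card {p\<in>{T. ssyt n lam T} \<times> {T. comp_tableau n \<beta> T}. tmono lam (fst p) + tmono \<beta> (snd p) = e})"
proof -
  have "schur n lam * qschur n \<beta> = (\<Sum>T1\<in>{T. ssyt n lam T}. \<Sum>T2\<in>{T. comp_tableau n \<beta> T}.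
      Poly_Mapping.single (tmono lam T1 + tmono \<beta> T2) (1::int))"
    unfolding schur_def qschur_def tab_monomial_eq sum_product mult_single by simp
  also have "\<dots> = (\<Sum>p\<in>{T. ssyt n lam T} \<times> {T. comp_tableau n \<beta> T}.
      Poly_Mapping.single (tmono lam (fst p) + tmono \<beta> (snd p)) (1::int))"
    by (simp add: sum.cartesian_product case_prod_beta)
  finally show ?thesis using lookup_single_sum[of "{T. ssyt n lam T} \<times> {T. comp_tableau n \<beta> T}"]
    by (simp add: finite_ct finite_ssyt)
qed

lemma keys_tmono: "kys (tmono \<alpha> T) = T ` cells \<alpha>"
proof -
  have "v \<in> kys (tmono \<alpha> T) \<longleftrightarrow> {c\<in>cells \<alpha>. T c = v} \<noteq> {}" for v
    by (simp add: in_keys_iff lookup_tmono)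
  thus ?thesis by (auto simp: image_iff)
qed

lemma keys_tmono_n: "filling n \<alpha> T \<Longrightarrow> kys (tmono \<alpha> T) \<subseteq> {1..n}"
  by (auto simp: keys_tmono filling_def)

lemma Q2:
  assumes "lkp (qschur n \<alpha>) e \<noteq> 0"
  shows "kys e \<subseteq> {1..n} \<and> dominates (partition_of \<alpha>) (partition_of (flat e))"
proof -
  have "card {T. comp_tableau n \<alpha> T \<and> tmono \<alpha> T = e} \<noteq> 0" using assms by (simp add: lookup_qschur)
  hence "{T. comp_tableau n \<alpha> T \<and> tmono \<alpha> T = e} \<noteq> {}" by (metis card.empty)
  then obtain T where T: "comp_tableau n \<alpha> T" "tmono \<alpha> T = e" by blast
  have "kys e \<subseteq> {1..n}" using T keys_tmono_n by (auto simp: comp_tableau_def)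
  moreover have "dominates (partition_of \<alpha>) (partition_of (flat e))"
    using dom_tmono[OF colinj_ct[OF T(1)]] T(2) by simp
  ultimately show ?thesis ..
qed

lemma Q3a:
  assumes "lkp (qschur n \<alpha>) e \<noteq> 0" "is_comp \<alpha>" "partition_of (flat e) = partition_of \<alpha>"
  shows "flat e = \<alpha>"
proof -
  have "card {T. comp_tableau n \<alpha> T \<and> tmono \<alpha> T = e} \<noteq> 0" using assms by (simp add: lookup_qschur)
  hence "{T. comp_tableau n \<alpha> T \<and> tmono \<alpha> T = e} \<noteq> {}" by (metis card.empty)
  then obtain T where T: "comp_tableau n \<alpha> T" "tmono \<alpha> T = e" by blast
  have "mset (flat (tmono \<alpha> T)) = mset \<alpha>" using assms(3) T(2) by (metis mset_partition_of)
  thus ?thesis using flat_eq[OF T(1) assms(2)] T(2) by simp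
qed

lemma Q3b:
  assumes ke: "kys e \<subseteq> {1..n}" and fe: "flat e = \<alpha>" and ic: "is_comp \<alpha>"
  shows "lkp (qschur n \<alpha>) e = 1"
proof -
  define s where "s = sorted_list_of_set (kys e)"
  have "length (flat e) = length \<alpha>" using fe by simp
  hence ls: "length s = length \<alpha>" by (simp add: flat_def s_def)
  have ss: "sorted_wrt (<) s" by (simp add: s_def)
  have smono: "i < j \<Longrightarrow> j < length \<alpha> \<Longrightarrow> s ! i < s ! j" for i j
    using ss ls by (simp add: sorted_wrt_iff_nth_less)
  have sinj: "i < length \<alpha> \<Longrightarrow> j < length \<alpha> \<Longrightarrow> s ! i = s ! j \<Longrightarrow> i = j" for i j
    by (cases i j rule: linorder_cases) (auto dest: smono)
  have sk: "i < length \<alpha> \<Longrightarrow> s ! i \<in> kys e" for i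
  proof -
    assume "i < length \<alpha>"
    hence "s ! i \<in> set s" using ls by simp
    thus "s ! i \<in> kys e" by (simp add: s_def)
  qed
  have fi: "i < length \<alpha> \<Longrightarrow> lkp e (s ! i) = \<alpha> ! i" for i
  proof -
    assume i: "i < length \<alpha>"
    have "flat e ! i = lkp e (s ! i)" using i ls by (simp add: flat_def s_def)
    thus ?thesis using fe by simp
  qed
  define T0 where "T0 = (\<lambda>c. if c \<in> cells \<alpha> then s ! fst c else 0)"
  have T0cell: "(i, j) \<in> cells \<alpha> \<Longrightarrow> T0 (i, j) = s ! i" for i j by (simp add: T0_def)
  have ct0: "comp_tableau n \<alpha> T0"
    unfolding comp_tableau_def
  proof (intro conjI allI impI)
    have "i < length \<alpha> \<Longrightarrow> s ! i \<in> {1..n}" for i using sk ke by blast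
    thus "filling n \<alpha> T0" unfolding filling_def
      by (auto simp: T0_def cells_def)
  next
    fix i j assume "i < length \<alpha> \<and> Suc j < \<alpha> ! i"
    thus "T0 (i, Suc j) \<le> T0 (i, j)" by (simp add: T0_def cells_def)
  next
    fix i i' assume a: "i < i' \<and> i' < length \<alpha>"
    have "0 < \<alpha> ! i" "0 < \<alpha> ! i'" using ic a by (auto simp: is_comp_def)
    thus "T0 (i, 0) < T0 (i', 0)" using a smono by (simp add: T0_def cells_def)
  next
    fix i j k assume a: "i < j \<and> (i, k) \<in> cells \<alpha> \<and> (j, k) \<in> cells \<alpha>" "\<alpha> ! j \<le> \<alpha> ! i \<and> 1 \<le> k"
    have "(i, k - 1) \<in> cells \<alpha>" using a by (auto simp: cells_def)
    thus "T0 (j, k) < T0 (i, k) \<or> T0 (i, k - 1) < T0 (j, k)" using a smono by (auto simp: T0_def cells_def)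
  next
    fix i j k assume a: "i < j \<and> (i, k) \<in> cells \<alpha> \<and> (j, k) \<in> cells \<alpha>" "\<alpha> ! i < \<alpha> ! j"
    have "(j, Suc k) \<in> cells \<alpha>" using a by (auto simp: cells_def)
    thus "T0 (j, k) < T0 (i, k) \<or> T0 (i, k) < T0 (j, Suc k)" using a smono by (auto simp: T0_def cells_def)
  qed
  have mono0: "tmono \<alpha> T0 = e"
  proof (rule poly_mapping_eqI)
    fix v
    show "lkp (tmono \<alpha> T0) v = lkp e v"
    proof (cases "\<exists>i<length \<alpha>. v = s ! i")
      case True
      then obtain i where i: "i < length \<alpha>" "v = s ! i" by blast
      have "{c\<in>cells \<alpha>. T0 c = v} = {i} \<times> {..<\<alpha>!i}"
      proof (rule set_eqI)
        fix c :: "nat \<times> nat"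
        obtain a b where c: "c = (a, b)" by fastforce
        show "c \<in> {c\<in>cells \<alpha>. T0 c = v} \<longleftrightarrow> c \<in> {i} \<times> {..<\<alpha>!i}"
          using i sinj[of a i] by (auto simp: T0_def cells_def c)
      qed
      thus ?thesis using i fi by (simp add: lookup_tmono card_cartesian_product)
    next
      case False
      hence "{c\<in>cells \<alpha>. T0 c = v} = {}" by (auto simp: T0_def cells_def)
      moreover have "v \<notin> kys e"
      proof
        assume "v \<in> kys e"
        hence "v \<in> set s" by (simp add: s_def)
        thus False using False ls by (metis in_set_conv_nth)
      qed
      ultimately show ?thesis by (simp add: lookup_tmono in_keys_iff)
    qed
  qed
  have "{T. comp_tableau n \<alpha> T \<and> tmono \<alpha> T = e} = {T0}"
  proof
    show "{T0} \<subseteq> {T. comp_tableau n \<alpha> T \<and> tmono \<alpha> T = e}" using ct0 mono0 by simp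
  next
    show "{T. comp_tableau n \<alpha> T \<and> tmono \<alpha> T = e} \<subseteq> {T0}"
    proof
      fix T assume "T \<in> {T. comp_tableau n \<alpha> T \<and> tmono \<alpha> T = e}"
      hence T: "comp_tableau n \<alpha> T" "tmono \<alpha> T = e" by auto
      have eqp: "mset (flat (tmono \<alpha> T)) = mset \<alpha>" using T(2) fe by simp
      have "T y = T0 y" for y
      proof (cases "y \<in> cells \<alpha>")
        case True
        then show ?thesis using T_canon[OF T(1) ic eqp True] T(2) by (simp add: T0_def s_def)
      next
        case False
        have "filling n \<alpha> T" using T(1) by (simp add: comp_tableau_def)
        hence "T y = 0" using False unfolding filling_def by blast
        then show ?thesis using False by (simp add: T0_def)
      qed
      thus "T \<in> {T0}" by auto
    qed
  qed
  thus ?thesis by (simp add: lookup_qschur)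
qed


definition QS :: "nat \<Rightarrow> ipoly \<Rightarrow> bool" where
  "QS n P \<longleftrightarrow> (\<forall>e. lkp P e \<noteq> 0 \<longrightarrow> kys e \<subseteq> {1..n}) \<and>
     (\<forall>e e'. kys e \<subseteq> {1..n} \<longrightarrow> kys e' \<subseteq> {1..n} \<longrightarrow> flat e = flat e' \<longrightarrow> lkp P e = lkp P e')"

lemma order_emb_lt:
  fixes \<sigma> :: "nat \<Rightarrow> nat"
  assumes "\<forall>a\<in>W. \<forall>b\<in>W. a < b \<longrightarrow> \<sigma> a < \<sigma> b" "a \<in> W" "b \<in> W"
  shows "(\<sigma> a < \<sigma> b) = (a < b)"
  using assms by (metis linorder_neqE_nat not_less_iff_gr_or_eq order_less_imp_not_less)

lemma order_emb:
  fixes \<sigma> :: "nat \<Rightarrow> nat"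
  assumes "\<forall>a\<in>W. \<forall>b\<in>W. a < b \<longrightarrow> \<sigma> a < \<sigma> b" "a \<in> W" "b \<in> W"
  shows "(\<sigma> a < \<sigma> b) = (a < b)" "(\<sigma> a \<le> \<sigma> b) = (a \<le> b)"
proof -
  show "(\<sigma> a < \<sigma> b) = (a < b)" by (rule order_emb_lt[OF assms])
  have "(\<sigma> b < \<sigma> a) = (b < a)" by (rule order_emb_lt[OF assms(1,3,2)])
  thus "(\<sigma> a \<le> \<sigma> b) = (a \<le> b)" by (simp add: not_less[symmetric])
qed

lemma ct_relabel:
  fixes \<sigma> :: "nat \<Rightarrow> nat"
  assumes sm: "\<forall>a\<in>W. \<forall>b\<in>W. a < b \<longrightarrow> \<sigma> a < \<sigma> b" and TW: "\<forall>c. T c \<in> W"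
    and s0: "\<sigma> 0 = 0" and rng: "\<forall>c\<in>cells \<alpha>. \<sigma> (T c) \<in> {1..n}"
    and ct: "comp_tableau n \<alpha> T"
  shows "comp_tableau n \<alpha> (\<sigma> \<circ> T)"
proof -
  have lt: "(\<sigma> (T a) < \<sigma> (T b)) = (T a < T b)" for a b using order_emb[OF sm TW[rule_format] TW[rule_format]] by blast
  have le: "(\<sigma> (T a) \<le> \<sigma> (T b)) = (T a \<le> T b)" for a b using order_emb[OF sm TW[rule_format] TW[rule_format]] by blast
  have fil: "filling n \<alpha> (\<sigma> \<circ> T)"
    using ct rng s0 unfolding comp_tableau_def filling_def by auto
  show ?thesis using ct fil unfolding comp_tableau_def by (simp add: lt le)
qed

lemma ssyt_relabel:
  fixes \<sigma> :: "nat \<Rightarrow> nat"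
  assumes sm: "\<forall>a\<in>W. \<forall>b\<in>W. a < b \<longrightarrow> \<sigma> a < \<sigma> b" and TW: "\<forall>c. T c \<in> W"
    and s0: "\<sigma> 0 = 0" and rng: "\<forall>c\<in>cells \<alpha>. \<sigma> (T c) \<in> {1..n}"
    and ct: "ssyt n \<alpha> T"
  shows "ssyt n \<alpha> (\<sigma> \<circ> T)"
proof -
  have lt: "(\<sigma> (T a) < \<sigma> (T b)) = (T a < T b)" for a b using order_emb[OF sm TW[rule_format] TW[rule_format]] by blast
  have le: "(\<sigma> (T a) \<le> \<sigma> (T b)) = (T a \<le> T b)" for a b using order_emb[OF sm TW[rule_format] TW[rule_format]] by blast
  have fil: "filling n \<alpha> (\<sigma> \<circ> T)"
    using ct rng s0 unfolding ssyt_def filling_def by auto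
  show ?thesis using ct fil unfolding ssyt_def by (simp add: lt le)
qed

lemma push_tmono:
  assumes TA: "\<forall>c\<in>cells \<alpha>. T c \<in> A" and inj: "inj_on \<sigma> A" and v: "v \<in> A"
  shows "lkp (tmono \<alpha> (\<sigma> \<circ> T)) (\<sigma> v) = lkp (tmono \<alpha> T) v"
proof -
  have "{c\<in>cells \<alpha>. \<sigma> (T c) = \<sigma> v} = {c\<in>cells \<alpha>. T c = v}"
    using TA inj v by (auto simp: inj_on_def)
  thus ?thesis by (simp add: lookup_tmono)
qed

lemma push_tmono0:
  assumes TA: "\<forall>c\<in>cells \<alpha>. T c \<in> A" and w: "w \<notin> \<sigma> ` A"
  shows "lkp (tmono \<alpha> (\<sigma> \<circ> T)) w = 0"
proof -
  have "{c\<in>cells \<alpha>. \<sigma> (T c) = w} = {}" using TA w by auto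
  thus ?thesis by (simp add: lookup_tmono)
qed

lemma keys_sub_add: "kys (a::nat \<Rightarrow>\<^sub>0 nat) \<subseteq> kys (a + b)"
  by (auto simp: in_keys_iff lookup_add)

lemma keys_add_sub: "kys ((a::nat \<Rightarrow>\<^sub>0 nat) + b) \<subseteq> kys a \<union> kys b"
  by (auto simp: in_keys_iff lookup_add)

definition PS :: "nat \<Rightarrow> nat list \<Rightarrow> nat list \<Rightarrow> (nat \<Rightarrow>\<^sub>0 nat) \<Rightarrow> ((nat \<times> nat \<Rightarrow> nat) \<times> (nat \<times> nat \<Rightarrow> nat)) set" where
  "PS n lam \<beta> e = {p\<in>{T. ssyt n lam T} \<times> {T. comp_tableau n \<beta> T}. tmono lam (fst p) + tmono \<beta> (snd p) = e}"

lemma finite_PS: "finite (PS n lam \<beta> e)"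
  unfolding PS_def by (rule finite_subset[OF _ finite_cartesian_product[OF finite_ssyt finite_ct]]) auto

lemma card_PS_le:
  assumes ke: "kys e \<subseteq> {1..n}" and ke': "kys e' \<subseteq> {1..n}" and fl: "flat e = flat e'"
  shows "card (PS n lam \<beta> e) \<le> card (PS n lam \<beta> e')"
proof -
  define s where "s = sorted_list_of_set (kys e)"
  define s' where "s' = sorted_list_of_set (kys e')"
  define L where "L = length s"
  have L': "length s' = L" using fl unfolding L_def s_def s'_def flat_def by (metis length_map)
  have ds: "distinct s" by (simp add: s_def)
  have sets: "set s = kys e" "set s' = kys e'" by (simp_all add: s_def s'_def)
  have ss: "sorted_wrt (<) s" "sorted_wrt (<) s'" by (simp_all add: s_def s'_def)
  have injs: "inj_on (nth s) {..<L}" using ds by (simp add: inj_on_nth L_def)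
  define \<sigma> where "\<sigma> = (\<lambda>v. if v \<in> kys e then s' ! (the_inv_into {..<L} (nth s) v) else 0)"
  have \<sigma>s: "i < L \<Longrightarrow> \<sigma> (s ! i) = s' ! i" for i
  proof -
    assume i: "i < L"
    have "s ! i \<in> kys e" using i sets by (metis L_def nth_mem)
    thus ?thesis using the_inv_into_f_f[OF injs] i by (simp add: \<sigma>_def)
  qed
  have ex: "v \<in> kys e \<Longrightarrow> \<exists>i<L. v = s ! i" for v using sets by (metis L_def in_set_conv_nth)
  have k0: "0 \<notin> kys e" "0 \<notin> kys e'" using ke ke' by auto
  have \<sigma>0: "\<sigma> 0 = 0" using k0 by (simp add: \<sigma>_def)
  define W where "W = insert 0 (kys e)"
  have \<sigma>k: "v \<in> kys e \<Longrightarrow> \<sigma> v \<in> kys e'" for v using ex \<sigma>s sets L' by (metis nth_mem)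
  have sm: "\<forall>a\<in>W. \<forall>b\<in>W. a < b \<longrightarrow> \<sigma> a < \<sigma> b"
  proof (intro ballI impI)
    fix a b assume a: "a \<in> W" and b: "b \<in> W" and ab: "a < b"
    have bk: "b \<in> kys e" using b ab by (auto simp: W_def)
    show "\<sigma> a < \<sigma> b"
    proof (cases "a = 0")
      case True
      have "\<sigma> b \<in> {1..n}" using \<sigma>k[OF bk] ke' by auto
      then show ?thesis using True \<sigma>0 by simp
    next
      case False
      hence ak: "a \<in> kys e" using a by (auto simp: W_def)
      obtain i j where ij: "i < L" "a = s ! i" "j < L" "b = s ! j" using ex ak bk by blast
      have "i < j"
      proof (rule ccontr)
        assume "\<not> i < j"
        hence "j \<le> i" by simp
        hence "s ! j \<le> s ! i"
        proof (cases "j = i")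
          case False with \<open>j \<le> i\<close> have "j < i" by simp
          thus ?thesis using ss(1) ij by (simp add: sorted_wrt_iff_nth_less L_def less_imp_le)
        qed simp
        thus False using ab ij by simp
      qed
      hence "s' ! i < s' ! j" using ss(2) ij L' by (simp add: sorted_wrt_iff_nth_less)
      thus ?thesis using ij \<sigma>s by simp
    qed
  qed
  have injW: "inj_on \<sigma> (kys e)"
  proof (rule inj_onI)
    fix a b assume "a \<in> kys e" "b \<in> kys e" "\<sigma> a = \<sigma> b"
    thus "a = b" using sm by (metis W_def insertCI linorder_neqE_nat order_less_irrefl)
  qed
  have imgk: "\<sigma> ` kys e = kys e'"
  proof
    show "\<sigma> ` kys e \<subseteq> kys e'" using \<sigma>k by auto
  next
    show "kys e' \<subseteq> \<sigma> ` kys e"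
    proof
      fix w assume "w \<in> kys e'"
      then obtain j where j: "j < L" "w = s' ! j" using sets L' by (metis in_set_conv_nth)
      have "s ! j \<in> kys e" using j sets by (metis L_def nth_mem)
      thus "w \<in> \<sigma> ` kys e" using \<sigma>s[OF j(1)] j(2) by force
    qed
  qed
  have lk: "v \<in> kys e \<Longrightarrow> lkp e' (\<sigma> v) = lkp e v" for v
  proof -
    assume "v \<in> kys e"
    then obtain i where i: "i < L" "v = s ! i" using ex by blast
    have "lkp e (s ! i) = flat e ! i" using i by (simp add: flat_def s_def L_def)
    also have "\<dots> = flat e' ! i" using fl by simp
    also have "\<dots> = lkp e' (s' ! i)" using i L' by (simp add: flat_def s'_def)
    finally show ?thesis using i \<sigma>s by simp
  qed
  define F where "F = (\<lambda>p::(nat \<times> nat \<Rightarrow> nat) \<times> (nat \<times> nat \<Rightarrow> nat). (\<sigma> \<circ> fst p, \<sigma> \<circ> snd p))"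
  have vals: "\<forall>c. T c \<in> W" and valk: "\<forall>c\<in>cells \<alpha>. T c \<in> kys e"
    if "filling n \<alpha> T" "kys (tmono \<alpha> T) \<subseteq> kys e" for \<alpha> T
  proof -
    show "\<forall>c\<in>cells \<alpha>. T c \<in> kys e" using that keys_tmono by blast
    thus "\<forall>c. T c \<in> W" using that(1) unfolding filling_def W_def by blast
  qed
  have maps: "F p \<in> PS n lam \<beta> e'" if p: "p \<in> PS n lam \<beta> e" for p
  proof -
    obtain T1 T2 where pp: "p = (T1, T2)" by fastforce
    have T1: "ssyt n lam T1" and T2: "comp_tableau n \<beta> T2" and m: "tmono lam T1 + tmono \<beta> T2 = e"
      using p by (auto simp: PS_def pp)
    have f1: "filling n lam T1" using T1 by (simp add: ssyt_def)
    have f2: "filling n \<beta> T2" using T2 by (simp add: comp_tableau_def)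
    have k1: "kys (tmono lam T1) \<subseteq> kys e" using m keys_sub_add by blast
    have k2: "kys (tmono \<beta> T2) \<subseteq> kys e" using m keys_sub_add by (metis add.commute)
    note v1 = vals[OF f1 k1] valk[OF f1 k1] and v2 = vals[OF f2 k2] valk[OF f2 k2]
    have r1: "\<forall>c\<in>cells lam. \<sigma> (T1 c) \<in> {1..n}" using v1(2) \<sigma>k ke' by blast
    have r2: "\<forall>c\<in>cells \<beta>. \<sigma> (T2 c) \<in> {1..n}" using v2(2) \<sigma>k ke' by blast
    have S1: "ssyt n lam (\<sigma> \<circ> T1)" by (rule ssyt_relabel[OF sm v1(1) \<sigma>0 r1 T1])
    have S2: "comp_tableau n \<beta> (\<sigma> \<circ> T2)" by (rule ct_relabel[OF sm v2(1) \<sigma>0 r2 T2])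
    have "tmono lam (\<sigma> \<circ> T1) + tmono \<beta> (\<sigma> \<circ> T2) = e'"
    proof (rule poly_mapping_eqI)
      fix w
      show "lkp (tmono lam (\<sigma> \<circ> T1) + tmono \<beta> (\<sigma> \<circ> T2)) w = lkp e' w"
      proof (cases "w \<in> kys e'")
        case True
        then obtain v where v: "v \<in> kys e" "w = \<sigma> v" using imgk by auto
        have "lkp (tmono lam (\<sigma> \<circ> T1) + tmono \<beta> (\<sigma> \<circ> T2)) w = lkp (tmono lam T1) v + lkp (tmono \<beta> T2) v"
          using push_tmono[OF v1(2) injW v(1)] push_tmono[OF v2(2) injW v(1)] v(2) by (simp add: lookup_add)
        also have "\<dots> = lkp e v" using m by (metis lookup_add)
        finally show ?thesis using lk[OF v(1)] v(2) by simp
      next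
        case False
        hence "w \<notin> \<sigma> ` kys e" using imgk by simp
        hence "lkp (tmono lam (\<sigma> \<circ> T1)) w = 0" "lkp (tmono \<beta> (\<sigma> \<circ> T2)) w = 0"
          using push_tmono0[OF v1(2)] push_tmono0[OF v2(2)] by auto
        then show ?thesis using False by (simp add: lookup_add in_keys_iff)
      qed
    qed
    thus ?thesis using S1 S2 by (simp add: PS_def F_def pp)
  qed
  have injF: "inj_on F (PS n lam \<beta> e)"
  proof (rule inj_onI)
    fix p q assume p: "p \<in> PS n lam \<beta> e" and q: "q \<in> PS n lam \<beta> e" and eq: "F p = F q"
    have allW: "\<forall>c. fst r c \<in> W" "\<forall>c. snd r c \<in> W" if "r \<in> PS n lam \<beta> e" for r
    proof -
      obtain T1 T2 where pp: "r = (T1, T2)" by fastforce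
      have T1: "ssyt n lam T1" and T2: "comp_tableau n \<beta> T2" and m: "tmono lam T1 + tmono \<beta> T2 = e"
        using that by (auto simp: PS_def pp)
      have f1: "filling n lam T1" using T1 by (simp add: ssyt_def)
      have f2: "filling n \<beta> T2" using T2 by (simp add: comp_tableau_def)
      have k1: "kys (tmono lam T1) \<subseteq> kys e" using m keys_sub_add by blast
      have k2: "kys (tmono \<beta> T2) \<subseteq> kys e" using m keys_sub_add by (metis add.commute)
      show "\<forall>c. fst r c \<in> W" "\<forall>c. snd r c \<in> W" using vals[OF f1 k1] vals[OF f2 k2] pp by auto
    qed
    have injW': "inj_on \<sigma> W"
    proof (rule inj_onI)
      fix a b assume "a \<in> W" "b \<in> W" "\<sigma> a = \<sigma> b"
      thus "a = b" using sm by (metis linorder_neqE_nat order_less_irrefl)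
    qed
    have "fst p = fst q"
    proof
      fix c
      have "(\<sigma> \<circ> fst p) c = (\<sigma> \<circ> fst q) c" using eq by (simp add: F_def)
      hence "\<sigma> (fst p c) = \<sigma> (fst q c)" by simp
      thus "fst p c = fst q c" using injW' allW[OF p] allW[OF q] by (meson inj_onD)
    qed
    moreover have "snd p = snd q"
    proof
      fix c
      have "(\<sigma> \<circ> snd p) c = (\<sigma> \<circ> snd q) c" using eq by (simp add: F_def)
      hence "\<sigma> (snd p c) = \<sigma> (snd q c)" by simp
      thus "snd p c = snd q c" using injW' allW[OF p] allW[OF q] by (meson inj_onD)
    qed
    ultimately show "p = q" by (simp add: prod_eq_iff)
  qed
  show ?thesis using card_inj_on_le[OF injF _ finite_PS] maps by blast
qed

lemma QS_prod: "QS n (schur n lam * qschur n \<beta>)"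
proof -
  have lk: "lkp (schur n lam * qschur n \<beta>) e = int (card (PS n lam \<beta> e))" for e
    by (simp add: lookup_prod PS_def)
  have part1: "kys e \<subseteq> {1..n}" if "lkp (schur n lam * qschur n \<beta>) e \<noteq> 0" for e
  proof -
    have "card (PS n lam \<beta> e) \<noteq> 0" using that lk by simp
    hence "PS n lam \<beta> e \<noteq> {}" by (metis card.empty)
    then obtain T1 T2 where T1: "ssyt n lam T1" and T2: "comp_tableau n \<beta> T2" and m: "tmono lam T1 + tmono \<beta> T2 = e"
      by (auto simp: PS_def)
    have "kys (tmono lam T1) \<subseteq> {1..n}" using T1 keys_tmono_n by (simp add: ssyt_def)
    moreover have "kys (tmono \<beta> T2) \<subseteq> {1..n}" using T2 keys_tmono_n by (simp add: comp_tableau_def)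
    ultimately show ?thesis using m keys_add_sub by blast
  qed
  show ?thesis unfolding QS_def
  proof (intro conjI allI impI)
    fix e assume "lkp (schur n lam * qschur n \<beta>) e \<noteq> 0" thus "kys e \<subseteq> {1..n}" by (rule part1)
  next
    fix e e' assume a: "kys e \<subseteq> {1..n}" "kys e' \<subseteq> {1..n}" "flat e = flat e'"
    have "card (PS n lam \<beta> e) = card (PS n lam \<beta> e')"
      using card_PS_le[OF a, of lam \<beta>] card_PS_le[OF a(2) a(1) a(3)[symmetric], of lam \<beta>] by simp
    thus "lkp (schur n lam * qschur n \<beta>) e = lkp (schur n lam * qschur n \<beta>) e'" using lk by simp
  qed
qed

lemma schur_nil: "schur n [] = 1"
proof -
  have "{T. ssyt n [] T} = {\<lambda>_. 0}"
    by (auto simp: ssyt_def filling_def cells_def fun_eq_iff)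
  thus ?thesis by (simp add: schur_def tab_monomial_def cells_def)
qed

lemma QS_qschur: "QS n (qschur n \<beta>)"
  using QS_prod[of n "[]" \<beta>] by (simp add: schur_nil)


definition Good :: "nat \<Rightarrow> ipoly \<Rightarrow> (nat list \<Rightarrow> int) \<Rightarrow> bool" where
  "Good n P c \<longleftrightarrow> finite {\<gamma>. c \<gamma> \<noteq> 0} \<and> (\<forall>\<gamma>. c \<gamma> \<noteq> 0 \<longrightarrow> is_comp \<gamma> \<and> length \<gamma> \<le> n) \<and>
      P = (\<Sum>\<gamma>\<in>{\<gamma>. c \<gamma> \<noteq> 0}. of_int (c \<gamma>) * qschur n \<gamma>)"

definition emb :: "nat list \<Rightarrow> (nat \<Rightarrow>\<^sub>0 nat)" where
  "emb \<gamma> = Abs_poly_mapping (\<lambda>v. if 1 \<le> v \<and> v \<le> length \<gamma> then \<gamma> ! (v - 1) else 0)"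

lemma lookup_emb: "lkp (emb \<gamma>) v = (if 1 \<le> v \<and> v \<le> length \<gamma> then \<gamma> ! (v - 1) else 0)"
proof -
  have "finite {v. (if 1 \<le> v \<and> v \<le> length \<gamma> then \<gamma> ! (v - 1) else 0) \<noteq> 0}"
    by (rule finite_subset[of _ "{1..length \<gamma>}"]) (auto split: if_splits)
  thus ?thesis by (simp add: emb_def)
qed

lemma keys_emb: "is_comp \<gamma> \<Longrightarrow> kys (emb \<gamma>) = {1..length \<gamma>}"
  by (auto simp: in_keys_iff lookup_emb is_comp_def split: if_splits)

lemma flat_emb: "is_comp \<gamma> \<Longrightarrow> flat (emb \<gamma>) = \<gamma>"
proof -
  assume ic: "is_comp \<gamma>"
  have "sorted_list_of_set {1..length \<gamma>} = [1..<Suc (length \<gamma>)]"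
    by (metis atLeastLessThanSuc_atLeastAtMost sorted_list_of_set_range)
  hence "flat (emb \<gamma>) = map (lkp (emb \<gamma>)) [1..<Suc (length \<gamma>)]" by (simp add: flat_def keys_emb[OF ic])
  also have "[1..<Suc (length \<gamma>)] = map Suc [0..<length \<gamma>]" by (simp add: map_Suc_upt del: upt_Suc)
  also have "map (lkp (emb \<gamma>)) (map Suc [0..<length \<gamma>]) = \<gamma>"
    by (rule nth_equalityI) (simp_all add: lookup_emb del: upt_Suc)
  finally show ?thesis .
qed

lemma is_comp_flat: "is_comp (flat e)"
  by (auto simp: is_comp_def flat_def in_keys_iff)

lemma length_flat: "kys e \<subseteq> {1..n} \<Longrightarrow> length (flat e) \<le> n"
proof -
  assume "kys e \<subseteq> {1..n}"
  hence "card (kys e) \<le> card {1..n}" by (intro card_mono) auto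
  thus ?thesis by (simp add: flat_def)
qed

lemma lin_lookup: "lkp (\<Sum>\<gamma>\<in>A. of_int (c \<gamma>) * qschur n \<gamma>) e = (\<Sum>\<gamma>\<in>A. c \<gamma> * lkp (qschur n \<gamma>) e)"
  by (simp add: lookup_sum lookup_ofint_mult)

lemma finite_max:
  assumes "finite D" "D \<noteq> {}" "\<And>a. \<not> R a a" "\<And>a b c. R a b \<Longrightarrow> R b c \<Longrightarrow> R a c"
  shows "\<exists>m\<in>D. \<forall>b\<in>D. \<not> R m b"
  using assms(1,2)
proof (induction D rule: finite_ne_induct)
  case (singleton x)
  then show ?case using assms(3) by auto
next
  case (insert x F)
  then obtain m where m: "m \<in> F" "\<forall>b\<in>F. \<not> R m b" by blast
  show ?case
  proof (cases "R m x")
    case True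
    have "\<forall>b\<in>insert x F. \<not> R x b" using m True assms(3,4) by blast
    then show ?thesis by blast
  next
    case False
    then show ?thesis using m by blast
  qed
qed

definition Rs :: "nat list \<Rightarrow> nat list \<Rightarrow> bool" where
  "Rs a b \<longleftrightarrow> is_comp a \<and> is_comp b \<and> dominates (partition_of b) (partition_of a) \<and> partition_of a \<noteq> partition_of b"

lemma Rs_irrefl: "\<not> Rs a a" by (simp add: Rs_def)

lemma Rs_trans: "Rs a b \<Longrightarrow> Rs b c \<Longrightarrow> Rs a c"
proof -
  assume ab: "Rs a b" and bc: "Rs b c"
  have d1: "dominates (partition_of c) (partition_of a)" using ab bc dom_trans by (auto simp: Rs_def)
  moreover have "partition_of a \<noteq> partition_of c"
  proof
    assume eq: "partition_of a = partition_of c"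
    have "dominates (partition_of a) (partition_of b)" using bc eq by (simp add: Rs_def)
    hence "partition_of a = partition_of b" using ab dom_antisym is_comp_partition_of by (auto simp: Rs_def)
    thus False using ab by (simp add: Rs_def)
  qed
  ultimately show ?thesis using ab bc by (simp add: Rs_def)
qed

lemma Rs_max:
  assumes "finite D" "D \<noteq> {}"
  shows "\<exists>m\<in>D. \<forall>b\<in>D. \<not> Rs m b"
  by (rule finite_max[OF assms]) (use Rs_irrefl Rs_trans in blast)+

lemma sum_extend:
  assumes "finite B" "{\<gamma>. c \<gamma> \<noteq> 0} \<subseteq> B"
  shows "(\<Sum>\<gamma>\<in>{\<gamma>. c \<gamma> \<noteq> 0}. of_int (c \<gamma>) * qschur n \<gamma>) = (\<Sum>\<gamma>\<in>B. of_int (c \<gamma>) * qschur n \<gamma>)"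
  by (rule sum.mono_neutral_left[OF assms]) auto

lemma uniq:
  assumes g1: "Good n P c" and g2: "Good n P c'"
  shows "c = c'"
proof (rule ccontr)
  assume ne: "c \<noteq> c'"
  define A where "A = {\<gamma>. c \<gamma> \<noteq> 0} \<union> {\<gamma>. c' \<gamma> \<noteq> 0}"
  have finA: "finite A" using g1 g2 by (simp add: A_def Good_def)
  have Acomp: "\<gamma> \<in> A \<Longrightarrow> is_comp \<gamma> \<and> length \<gamma> \<le> n" for \<gamma> using g1 g2 by (auto simp: A_def Good_def)
  have P1: "P = (\<Sum>\<gamma>\<in>A. of_int (c \<gamma>) * qschur n \<gamma>)" using g1 sum_extend[OF finA] by (auto simp: Good_def A_def)
  have P2: "P = (\<Sum>\<gamma>\<in>A. of_int (c' \<gamma>) * qschur n \<gamma>)" using g2 sum_extend[OF finA] by (auto simp: Good_def A_def)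
  have z: "(\<Sum>\<gamma>\<in>A. (c \<gamma> - c' \<gamma>) * lkp (qschur n \<gamma>) e) = 0" for e
  proof -
    have "lkp P e = (\<Sum>\<gamma>\<in>A. c \<gamma> * lkp (qschur n \<gamma>) e)" by (subst P1) (rule lin_lookup)
    moreover have "lkp P e = (\<Sum>\<gamma>\<in>A. c' \<gamma> * lkp (qschur n \<gamma>) e)" by (subst P2) (rule lin_lookup)
    ultimately show ?thesis by (simp add: left_diff_distrib sum_subtractf)
  qed
  define D where "D = {\<gamma>\<in>A. c \<gamma> - c' \<gamma> \<noteq> 0}"
  have "D \<noteq> {}"
  proof
    assume "D = {}"
    hence "c \<gamma> = c' \<gamma>" for \<gamma> by (cases "\<gamma> \<in> A") (auto simp: D_def A_def)
    thus False using ne by auto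
  qed
  moreover have "finite D" using finA by (simp add: D_def)
  ultimately obtain g where g: "g \<in> D" "\<forall>b\<in>D. \<not> Rs g b" using Rs_max by blast
  have gc: "is_comp g" "length g \<le> n" using g Acomp by (auto simp: D_def)
  define e0 where "e0 = emb g"
  have fe0: "flat e0 = g" using gc by (simp add: e0_def flat_emb)
  have ke0: "kys e0 \<subseteq> {1..n}" using gc by (simp add: e0_def keys_emb)
  have others: "(c \<gamma> - c' \<gamma>) * lkp (qschur n \<gamma>) e0 = 0" if "\<gamma> \<in> A" "\<gamma> \<noteq> g" for \<gamma>
  proof (rule ccontr)
    assume "(c \<gamma> - c' \<gamma>) * lkp (qschur n \<gamma>) e0 \<noteq> 0"
    hence d: "\<gamma> \<in> D" and l: "lkp (qschur n \<gamma>) e0 \<noteq> 0" using that by (auto simp: D_def)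
    have "dominates (partition_of \<gamma>) (partition_of g)" using Q2[OF l] fe0 by simp
    hence "partition_of g = partition_of \<gamma>" using g(2) d Acomp[OF that(1)] gc by (auto simp: Rs_def)
    hence "flat e0 = \<gamma>" using Q3a[OF l] Acomp[OF that(1)] fe0 by simp
    thus False using fe0 that(2) by simp
  qed
  have gA: "g \<in> A" using g(1) by (simp add: D_def)
  have "(\<Sum>\<gamma>\<in>A. (c \<gamma> - c' \<gamma>) * lkp (qschur n \<gamma>) e0) =
     (c g - c' g) * lkp (qschur n g) e0 + (\<Sum>\<gamma>\<in>A - {g}. (c \<gamma> - c' \<gamma>) * lkp (qschur n \<gamma>) e0)"
    by (rule sum.remove[OF finA gA])
  also have "(\<Sum>\<gamma>\<in>A - {g}. (c \<gamma> - c' \<gamma>) * lkp (qschur n \<gamma>) e0) = 0"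
    by (rule sum.neutral) (use others in auto)
  finally have "(\<Sum>\<gamma>\<in>A. (c \<gamma> - c' \<gamma>) * lkp (qschur n \<gamma>) e0) = (c g - c' g) * lkp (qschur n g) e0" by simp
  moreover have "lkp (qschur n g) e0 = 1" using Q3b[OF ke0 fe0 gc(1)] .
  ultimately have "c g - c' g = 0" using z[of e0] by simp
  thus False using g(1) by (simp add: D_def)
qed


definition Down :: "nat list \<Rightarrow> ipoly \<Rightarrow> nat list set" where
  "Down \<mu> P = {q. is_comp q \<and> sum_list q \<le> sum_list \<mu> \<and> (\<exists>e. lkp P e \<noteq> 0 \<and> dominates (partition_of (flat e)) q)}"

lemma finite_Down: "finite (Down \<mu> P)"
  by (rule finite_subset[OF _ finite_comps[of "sum_list \<mu>"]]) (auto simp: Down_def)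

lemma exist:
  "QS n P \<Longrightarrow> (\<forall>e. lkp P e \<noteq> 0 \<longrightarrow> dominates \<mu> (partition_of (flat e))) \<Longrightarrow>
   \<exists>c. Good n P c \<and> (\<forall>\<gamma>. c \<gamma> \<noteq> 0 \<longrightarrow> dominates \<mu> (partition_of \<gamma>))"
proof (induction "card (Down \<mu> P)" arbitrary: P rule: less_induct)
  case less
  have qs: "QS n P" and bd: "\<forall>e. lkp P e \<noteq> 0 \<longrightarrow> dominates \<mu> (partition_of (flat e))" by fact+
  have qs1: "lkp P e \<noteq> 0 \<Longrightarrow> kys e \<subseteq> {1..n}" for e using qs unfolding QS_def by blast
  have qs2: "kys e \<subseteq> {1..n} \<Longrightarrow> kys e' \<subseteq> {1..n} \<Longrightarrow> flat e = flat e' \<Longrightarrow> lkp P e = lkp P e'" for e e'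
    using qs unfolding QS_def by blast
  show ?case
  proof (cases "P = 0")
    case True
    have "Good n P (\<lambda>_. 0)" using True by (simp add: Good_def)
    then show ?thesis by blast
  next
    case False
    hence kP: "kys P \<noteq> {}" by simp
    define FP where "FP = flat ` kys P"
    have finFP: "finite FP" "FP \<noteq> {}" using kP by (simp_all add: FP_def)
    have FPe: "\<gamma> \<in> FP \<Longrightarrow> \<exists>e. lkp P e \<noteq> 0 \<and> flat e = \<gamma>" for \<gamma> by (auto simp: FP_def in_keys_iff)
    have FPc: "is_comp \<gamma> \<and> length \<gamma> \<le> n \<and> dominates \<mu> (partition_of \<gamma>)" if gF: "\<gamma> \<in> FP" for \<gamma>
    proof -
      obtain e where e: "lkp P e \<noteq> 0" "flat e = \<gamma>" using FPe[OF gF] by blast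
      show ?thesis using e is_comp_flat[of e] length_flat[OF qs1[OF e(1)]] bd by auto
    qed
    define a where "a = (\<lambda>\<gamma>. lkp P (emb \<gamma>))"
    have a_eq: "a (flat e) = lkp P e" if "kys e \<subseteq> {1..n}" for e
    proof -
      have "kys (emb (flat e)) \<subseteq> {1..n}" using that length_flat[OF that] by (simp add: keys_emb is_comp_flat)
      moreover have "flat (emb (flat e)) = flat e" by (simp add: flat_emb is_comp_flat)
      ultimately have "lkp P (emb (flat e)) = lkp P e" using that by (intro qs2)
      thus ?thesis by (simp add: a_def)
    qed
    obtain g where g: "g \<in> FP" "\<forall>b\<in>FP. \<not> Rs g b" using Rs_max[OF finFP] by blast
    define m where "m = partition_of g"
    define G where "G = {\<gamma>\<in>FP. partition_of \<gamma> = m}"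
    have finG: "finite G" using finFP by (simp add: G_def)
    define P' where "P' = P - (\<Sum>\<gamma>\<in>G. of_int (a \<gamma>) * qschur n \<gamma>)"
    have lP': "lkp P' e = lkp P e - (\<Sum>\<gamma>\<in>G. a \<gamma> * lkp (qschur n \<gamma>) e)" for e
      by (simp add: P'_def lookup_minus lin_lookup)
    have Gc: "\<gamma> \<in> G \<Longrightarrow> is_comp \<gamma> \<and> length \<gamma> \<le> n \<and> dominates \<mu> (partition_of \<gamma>)" for \<gamma>
      using FPc unfolding G_def by blast
    have nz: "lkp P e \<noteq> 0 \<or> (\<exists>\<gamma>\<in>G. lkp (qschur n \<gamma>) e \<noteq> 0)" if "lkp P' e \<noteq> 0" for e
    proof (rule ccontr)
      assume "\<not> ?thesis"
      hence "lkp P e = 0" "\<forall>\<gamma>\<in>G. lkp (qschur n \<gamma>) e = 0" by auto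
      thus False using that lP'[of e] by simp
    qed
    have QSq: "QS n (qschur n \<gamma>)" for \<gamma> by (rule QS_qschur)
    have qs': "QS n P'"
      unfolding QS_def
    proof (intro conjI allI impI)
      fix e assume "lkp P' e \<noteq> 0"
      from nz[OF this] show "kys e \<subseteq> {1..n}"
      proof
        assume "lkp P e \<noteq> 0" thus ?thesis by (rule qs1)
      next
        assume "\<exists>\<gamma>\<in>G. lkp (qschur n \<gamma>) e \<noteq> 0"
        then obtain \<gamma> where "lkp (qschur n \<gamma>) e \<noteq> 0" by blast
        thus ?thesis using QSq[of \<gamma>] unfolding QS_def by blast
      qed
    next
      fix e e' assume a: "kys e \<subseteq> {1..n}" "kys e' \<subseteq> {1..n}" "flat e = flat e'"
      have "lkp (qschur n \<gamma>) e = lkp (qschur n \<gamma>) e'" for \<gamma> using QSq[of \<gamma>] a unfolding QS_def by blast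
      then show "lkp P' e = lkp P' e'" using qs2[OF a] by (simp add: lP')
    qed
    have bd': "\<forall>e. lkp P' e \<noteq> 0 \<longrightarrow> dominates \<mu> (partition_of (flat e))"
    proof (intro allI impI)
      fix e assume "lkp P' e \<noteq> 0"
      then consider "lkp P e \<noteq> 0" | \<gamma> where "\<gamma> \<in> G" "lkp (qschur n \<gamma>) e \<noteq> 0" using nz by blast
      then show "dominates \<mu> (partition_of (flat e))"
      proof cases
        case 1 then show ?thesis using bd by blast
      next
        case 2
        have "dominates (partition_of \<gamma>) (partition_of (flat e))" using Q2[OF 2(2)] by simp
        then show ?thesis using Gc[OF 2(1)] dom_trans by blast
      qed
    qed
    have claim: "lkp P' e = 0" if ke: "kys e \<subseteq> {1..n}" and pe: "partition_of (flat e) = m" for e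
    proof -
      have only: "\<gamma> \<in> G \<Longrightarrow> lkp (qschur n \<gamma>) e \<noteq> 0 \<Longrightarrow> \<gamma> = flat e" for \<gamma>
        using Q3a[of n \<gamma> e] Gc pe by (auto simp: G_def)
      show ?thesis
      proof (cases "flat e \<in> G")
        case True
        have "(\<Sum>\<gamma>\<in>G. a \<gamma> * lkp (qschur n \<gamma>) e) = a (flat e) * lkp (qschur n (flat e)) e + (\<Sum>\<gamma>\<in>G - {flat e}. a \<gamma> * lkp (qschur n \<gamma>) e)"
          by (rule sum.remove[OF finG True])
        also have "(\<Sum>\<gamma>\<in>G - {flat e}. a \<gamma> * lkp (qschur n \<gamma>) e) = 0"
          by (rule sum.neutral) (use only in auto)
        also have "lkp (qschur n (flat e)) e = 1" using Q3b[OF ke refl is_comp_flat] .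
        finally show ?thesis using a_eq[OF ke] by (simp add: lP')
      next
        case False
        have "(\<Sum>\<gamma>\<in>G. a \<gamma> * lkp (qschur n \<gamma>) e) = 0"
          by (rule sum.neutral) (use only False in auto)
        moreover have "lkp P e = 0"
        proof (rule ccontr)
          assume "lkp P e \<noteq> 0"
          hence "flat e \<in> FP" by (auto simp: FP_def in_keys_iff)
          thus False using False pe by (simp add: G_def)
        qed
        ultimately show ?thesis by (simp add: lP')
      qed
    qed
    have sub: "Down \<mu> P' \<subseteq> Down \<mu> P"
    proof
      fix q assume "q \<in> Down \<mu> P'"
      then obtain e where q: "is_comp q" "sum_list q \<le> sum_list \<mu>" "lkp P' e \<noteq> 0" "dominates (partition_of (flat e)) q"
        by (auto simp: Down_def)
      from nz[OF q(3)] show "q \<in> Down \<mu> P"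
      proof
        assume "lkp P e \<noteq> 0" thus ?thesis using q by (auto simp: Down_def)
      next
        assume "\<exists>\<gamma>\<in>G. lkp (qschur n \<gamma>) e \<noteq> 0"
        then obtain \<gamma> where ga: "\<gamma> \<in> G" "lkp (qschur n \<gamma>) e \<noteq> 0" by blast
        obtain e'' where e'': "lkp P e'' \<noteq> 0" "flat e'' = \<gamma>" using FPe ga(1) by (auto simp: G_def)
        have "dominates (partition_of \<gamma>) (partition_of (flat e))" using Q2[OF ga(2)] by simp
        hence "dominates (partition_of (flat e'')) q" using q(4) e''(2) dom_trans by blast
        thus ?thesis using q e''(1) by (auto simp: Down_def)
      qed
    qed
    have gc: "is_comp g" using FPc g(1) by simp
    have mD: "m \<in> Down \<mu> P"
    proof -
      obtain e where e: "lkp P e \<noteq> 0" "flat e = g" using FPe g(1) by blast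
      have "dominates \<mu> m" using bd e unfolding m_def by blast
      hence "sum_list m \<le> sum_list \<mu>" by (rule dom_sum)
      thus ?thesis using e gc is_comp_partition_of dom_refl by (auto simp: Down_def m_def)
    qed
    have mD': "m \<notin> Down \<mu> P'"
    proof
      assume "m \<in> Down \<mu> P'"
      then obtain e where e: "lkp P' e \<noteq> 0" "dominates (partition_of (flat e)) m" by (auto simp: Down_def)
      have ke: "kys e \<subseteq> {1..n}" using qs' e(1) unfolding QS_def by blast
      show False
      proof (cases "partition_of (flat e) = m")
        case True then show False using claim[OF ke True] e(1) by simp
      next
        case ne: False
        from nz[OF e(1)] show False
        proof
          assume "lkp P e \<noteq> 0"
          hence "flat e \<in> FP" by (auto simp: FP_def in_keys_iff)
          moreover have "Rs g (flat e)" using e(2) ne gc is_comp_flat by (simp add: Rs_def m_def)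
          ultimately show False using g(2) by blast
        next
          assume "\<exists>\<gamma>\<in>G. lkp (qschur n \<gamma>) e \<noteq> 0"
          then obtain \<gamma> where ga: "\<gamma> \<in> G" "lkp (qschur n \<gamma>) e \<noteq> 0" by blast
          have "dominates m (partition_of (flat e))" using Q2[OF ga(2)] ga(1) by (simp add: G_def)
          hence "partition_of (flat e) = m"
            using dom_antisym[OF is_comp_partition_of[OF is_comp_flat] _ e(2)] is_comp_partition_of[OF gc]
            by (simp add: m_def)
          thus False using ne by simp
        qed
      qed
    qed
    have "card (Down \<mu> P') < card (Down \<mu> P)"
      by (rule psubset_card_mono[OF finite_Down]) (use sub mD mD' in blast)
    then obtain c' where c': "Good n P' c'" "\<forall>\<gamma>. c' \<gamma> \<noteq> 0 \<longrightarrow> dominates \<mu> (partition_of \<gamma>)"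
      using less.hyps qs' bd' by blast
    define c where "c = (\<lambda>\<gamma>. c' \<gamma> + (if \<gamma> \<in> G then a \<gamma> else 0))"
    define B where "B = {\<gamma>. c' \<gamma> \<noteq> 0} \<union> G"
    have finB: "finite B" using c'(1) finG by (simp add: B_def Good_def)
    have suppc: "{\<gamma>. c \<gamma> \<noteq> 0} \<subseteq> B" by (auto simp: c_def B_def split: if_splits)
    have finc: "finite {\<gamma>. c \<gamma> \<noteq> 0}" using finite_subset[OF suppc finB] .
    have cprop: "c \<gamma> \<noteq> 0 \<Longrightarrow> is_comp \<gamma> \<and> length \<gamma> \<le> n \<and> dominates \<mu> (partition_of \<gamma>)" for \<gamma>
    proof -
      assume "c \<gamma> \<noteq> 0"
      hence "c' \<gamma> \<noteq> 0 \<or> \<gamma> \<in> G" by (auto simp: c_def split: if_splits)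
      thus ?thesis using c' Gc by (auto simp: Good_def)
    qed
    have "(\<Sum>\<gamma>\<in>{\<gamma>. c \<gamma> \<noteq> 0}. of_int (c \<gamma>) * qschur n \<gamma>) = (\<Sum>\<gamma>\<in>B. of_int (c \<gamma>) * qschur n \<gamma>)"
      by (rule sum_extend[OF finB suppc])
    also have "\<dots> = (\<Sum>\<gamma>\<in>B. of_int (c' \<gamma>) * qschur n \<gamma>) + (\<Sum>\<gamma>\<in>B. of_int (if \<gamma> \<in> G then a \<gamma> else 0) * qschur n \<gamma>)"
      by (simp add: c_def distrib_right sum.distrib)
    also have "(\<Sum>\<gamma>\<in>B. of_int (c' \<gamma>) * qschur n \<gamma>) = P'"
      using c'(1) sum_extend[OF finB, of c' n] by (simp add: Good_def B_def)
    also have "(\<Sum>\<gamma>\<in>B. of_int (if \<gamma> \<in> G then a \<gamma> else 0) * qschur n \<gamma>) = (\<Sum>\<gamma>\<in>G. of_int (a \<gamma>) * qschur n \<gamma>)"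
    proof -
      have "(\<Sum>\<gamma>\<in>B. of_int (if \<gamma> \<in> G then a \<gamma> else 0) * qschur n \<gamma>) = (\<Sum>\<gamma>\<in>G. of_int (if \<gamma> \<in> G then a \<gamma> else 0) * qschur n \<gamma>)"
        by (rule sum.mono_neutral_right[OF finB]) (auto simp: B_def)
      thus ?thesis by simp
    qed
    also have "P' + (\<Sum>\<gamma>\<in>G. of_int (a \<gamma>) * qschur n \<gamma>) = P" by (simp add: P'_def)
    finally have "P = (\<Sum>\<gamma>\<in>{\<gamma>. c \<gamma> \<noteq> 0}. of_int (c \<gamma>) * qschur n \<gamma>)" ..
    hence "Good n P c" using finc cprop by (simp add: Good_def)
    thus ?thesis using cprop by blast
  qed
qed


theorem theorem5p5:
  fixes n d :: nat and lam \<beta> \<alpha> :: "nat list"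
  assumes "1 \<le> n"
    and "is_partition lam"
    and "\<beta> \<in> Bset n"
    and "length lam \<le> n" and "length \<beta> \<le> n"
    and "sum_list lam + sum_list \<beta> = d"
    and "is_comp \<alpha>" and "sum_list \<alpha> = d" and "length \<alpha> \<le> n"
    and "\<not> dominates (partition_of (phi lam \<beta>)) (partition_of \<alpha>)"
  shows "lr_coeff n lam \<beta> \<alpha> = 0"
proof -
  define P where "P = schur n lam * qschur n \<beta>"
  define \<mu> where "\<mu> = partition_of (phi lam \<beta>)"
  have lampart: "partition_of lam = lam" using assms(2) by (rule partition_of_partition)
  have bd: "\<forall>e. lkp P e \<noteq> 0 \<longrightarrow> dominates \<mu> (partition_of (flat e))"
  proof (intro allI impI)
    fix e assume "lkp P e \<noteq> 0"
    hence "card (PS n lam \<beta> e) \<noteq> 0" by (simp add: P_def lookup_prod PS_def)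
    hence "PS n lam \<beta> e \<noteq> {}" by (metis card.empty)
    then obtain T1 T2 where T1: "ssyt n lam T1" and T2: "comp_tableau n \<beta> T2" and m: "tmono lam T1 + tmono \<beta> T2 = e"
      by (auto simp: PS_def)
    show "dominates \<mu> (partition_of (flat e))"
      unfolding dominates_def
    proof
      fix k
      have "sum_list (take k (partition_of (flat e))) \<le> sum_list (take k (partition_of lam)) + sum_list (take k (partition_of \<beta>))"
        using dom_prod_bound[OF colinj_ssyt[OF assms(2) T1] colinj_ct[OF T2], of k] m by simp
      also have "\<dots> \<le> sum_list (take k \<mu>)" using phi_bound[of k lam \<beta>] lampart by (simp add: \<mu>_def)
      finally show "sum_list (take k (partition_of (flat e))) \<le> sum_list (take k \<mu>)" .
    qed
  qed
  obtain c where c: "Good n P c" "\<forall>\<gamma>. c \<gamma> \<noteq> 0 \<longrightarrow> dominates \<mu> (partition_of \<gamma>)"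
    using exist[OF _ bd] QS_prod[of n lam \<beta>] by (auto simp: P_def)
  have "(THE c. Good n P c) = c"
  proof (rule the_equality)
    show "Good n P c" by (rule c(1))
  next
    fix c' assume "Good n P c'" thus "c' = c" using uniq c(1) by blast
  qed
  moreover have "lr_coeff n lam \<beta> \<alpha> = (THE c. Good n P c) \<alpha>" by (simp add: lr_coeff_def Good_def P_def)
  ultimately have "lr_coeff n lam \<beta> \<alpha> = c \<alpha>" by simp
  moreover have "c \<alpha> = 0" using c(2) assms(10) by (auto simp: \<mu>_def)
  ultimately show ?thesis by simp
qed


end
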